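(* Let $\mu$ be a self-similar measure whose underlying attractor is a missing digit Cantor set. Then $\dim_{\ell^1}\mu=\dim^{\star}_{\ell^1}\mu$. The same holds when the attractor is a shifted missing digit Cantor set.
   Context: For $b\ge3$ and $D\subset\{0,\dots,b-1\}$ with $\#D\ge2$, the missing digit Cantor set $K_{b,D}$ is the attractor of the iterated function system $\{f_i(x)=\frac{x+i}{b}: i\in D\}$; for $x_0\in\mathbb{R}$ the shifted set $K_{b,D}+x_0$ is the attractor of $\{f_i(x)=\frac{x+i}{b}+x_0(1-\frac1b):i\in D\}$. A self-similar measure with such an attractor is the unique Borel probability measure $\mu$ with $\mu=\sum_{i\in D}p_i(f_i)_*\mu$ for a probability vector $(p_i)_{i\in D}$. $\widehat\mu(\xi)=\int e(\xi x)d\mu(x)$, $e(z)=\exp(2\pi iz)$; $\dim_{\ell^1}\mu=1-\inf\{s:\lim_{X\to\infty}X^{-s}\sum_{m\in\mathbb{Z},|m|\le X}|\widehat\mu(m)|=0\}$ and $\dim^{\star}_{\ell^1}\mu=1-\inf\{s:\lim_{X\to\infty}X^{-s}\sup_{0\le\theta\le1}\sum_{m\in\mathbb{Z},|m|\le X}|\widehat\mu(m+\theta)|=0\}$. *)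

theory Defs
  imports "HOL-Probability.Probability"
begin

text \<open>Maps of the (possibly shifted) missing digit IFS:
  f_i(x) = (x + i)/b + x0 (1 - 1/b).\<close>
definition mdmap :: "nat \<Rightarrow> real \<Rightarrow> nat \<Rightarrow> real \<Rightarrow> real" where
  "mdmap b x0 i x = (x + real i) / real b + x0 * (1 - 1 / real b)"

definition self_similar_md :: "nat \<Rightarrow> nat set \<Rightarrow> real \<Rightarrow> (nat \<Rightarrow> real) \<Rightarrow> real measure \<Rightarrow> bool" where
  "self_similar_md b D x0 p \<mu> \<longleftrightarrow>
     sets \<mu> = sets borel \<and> prob_space \<mu> \<and>
     (\<forall>A\<in>sets borel. measure \<mu> A = (\<Sum>i\<in>D. p i * measure \<mu> (mdmap b x0 i -` A)))"

definition fourier :: "real measure \<Rightarrow> real \<Rightarrow> complex" where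
  "fourier \<mu> \<xi> = (\<integral>x. cis (2 * pi * \<xi> * x) \<partial>\<mu>)"

definition l1sum :: "real measure \<Rightarrow> real \<Rightarrow> real \<Rightarrow> real" where
  "l1sum \<mu> \<theta> X = (\<Sum>m\<in>{m::int. \<bar>real_of_int m\<bar> \<le> X}. cmod (fourier \<mu> (real_of_int m + \<theta>)))"

definition dim_l1 :: "real measure \<Rightarrow> real" where
  "dim_l1 \<mu> = 1 - Inf {s::real. ((\<lambda>X. X powr (-s) * l1sum \<mu> 0 X) \<longlongrightarrow> 0) at_top}"

definition dim_l1_star :: "real measure \<Rightarrow> real" where
  "dim_l1_star \<mu> = 1 - Inf {s::real.
     ((\<lambda>X. X powr (-s) * (SUP \<theta>\<in>{0..1}. l1sum \<mu> \<theta> X)) \<longlongrightarrow> 0) at_top}"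

end

theory Submission
  imports Defs "HOL-Analysis.Harmonic_Numbers" "HOL-Analysis.Weierstrass_Theorems"
begin

definition Dk :: "nat \<Rightarrow> real \<Rightarrow> complex" where
  "Dk N t = (1 / of_nat N) * (\<Sum>J<N. cis (2 * pi * t * real J / real N))"

lemma cis_eq_1_int:
  assumes "cis x = 1" shows "\<exists>n::int. x = of_int n * 2 * pi"
proof -
  have "cos x = 1" using assms by (metis cis.sel(1) one_complex.sel(1))
  then show ?thesis using cos_one_2pi_int by auto
qed

lemma orth:
  assumes "J < N" "J' < N"
  shows "(\<Sum>r<N. cis (2 * pi * real r * (real J - real J') / real N)) = (if J = J' then of_nat N else 0)"
proof (cases "J = J'")
  case True
  then show ?thesis by simp
next
  case False
  define d where "d = real J - real J'"
  have Npos: "real N > 0" using assms by simp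
  define z where "z = cis (2 * pi * d / real N)"
  have zr: "cis (2 * pi * real r * d / real N) = z ^ r" for r
  proof -
    have "z ^ r = cis (real r * (2 * pi * d / real N))" unfolding z_def by (rule Complex.DeMoivre)
    then show ?thesis by (simp add: field_simps)
  qed
  have dint: "d \<in> \<int>" unfolding d_def by simp
  have zN: "z ^ N = 1"
  proof -
    have "z ^ N = cis (real N * (2 * pi * d / real N))" unfolding z_def by (rule Complex.DeMoivre)
    also have "real N * (2 * pi * d / real N) = 2 * pi * d" using Npos by simp
    also have "cis (2 * pi * d) = 1" using dint by (rule cis_multiple_2pi)
    finally show ?thesis .
  qed
  have z1: "z \<noteq> 1"
  proof
    assume "z = 1"
    then obtain n :: int where n: "2 * pi * d / real N = of_int n * 2 * pi"
      unfolding z_def using cis_eq_1_int by blast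
    then have "d = of_int n * real N" using Npos by (simp add: field_simps)
    moreover have "\<bar>d\<bar> < real N" "d \<noteq> 0" unfolding d_def using assms False by auto
    ultimately have "\<bar>of_int n\<bar> * real N < 1 * real N" "n \<noteq> 0" by (auto simp: abs_mult)
    then have "\<bar>of_int n :: real\<bar> < 1" using Npos mult_less_cancel_right_pos by blast
    with \<open>n \<noteq> 0\<close> show False by linarith
  qed
  have "(\<Sum>r<N. cis (2 * pi * real r * (real J - real J') / real N)) = (\<Sum>r<N. z ^ r)"
    using zr d_def by simp
  also have "\<dots> = 0" using geometric_sum[OF z1, of N] zN by simp
  finally show ?thesis using False by simp
qed

lemma prod_sums:
  fixes a d :: "nat \<Rightarrow> complex"
  shows "(\<Sum>J\<in>A. a J) * (c * (\<Sum>J'\<in>B. d J')) = (\<Sum>J\<in>A. \<Sum>J'\<in>B. c * (a J * d J'))"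
  unfolding sum_distrib_left[of c] sum_product by (simp only: mult_ac)

lemma dft:
  fixes w :: "nat \<Rightarrow> complex"
  assumes N: "N > 0"
  shows "(\<Sum>J<N. w J * cis (2 * pi * y * real J / real N)) =
         (\<Sum>r<N. (\<Sum>J<N. w J * cis (2 * pi * real r * real J / real N)) * Dk N (y - real r))"
proof -
  have Npos: "real N > 0" using N by simp
  define e where "e t = cis (2 * pi * t / real N)" for t
  have e_add: "e a * e c = e (a + c)" for a c unfolding e_def cis_mult by (simp add: add_divide_distrib distrib_left)
  have eq1: "cis (2 * pi * t * real J / real N) = e (t * real J)" for t J unfolding e_def by (simp add: mult.assoc)
  have eq2: "cis (2 * pi * real r * (real J - real J') / real N) = e (real r * (real J - real J'))" for r J J' unfolding e_def by (simp add: mult.assoc)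
  have split: "e (real r * real J) * e ((y - real r) * real J') = e (y * real J') * e (real r * (real J - real J'))" for r J J'
    unfolding e_add by (rule arg_cong[where f=e]) (simp add: algebra_simps)
  have "(\<Sum>r<N. (\<Sum>J<N. w J * e (real r * real J)) * ((1 / of_nat N) * (\<Sum>J'<N. e ((y - real r) * real J')))) =
      (\<Sum>r<N. \<Sum>J<N. \<Sum>J'<N. (w J * (1 / of_nat N)) * (e (y * real J') * e (real r * (real J - real J'))))"
    unfolding prod_sums
    by (intro sum.cong refl) (simp only: split[symmetric] mult_ac)
  also have "\<dots> = (\<Sum>J<N. \<Sum>J'<N. \<Sum>r<N. (w J * (1 / of_nat N) * e (y * real J')) * e (real r * (real J - real J')))"
    by (rule trans[OF sum.swap], rule sum.cong[OF refl], rule trans[OF sum.swap], rule sum.cong[OF refl], rule sum.cong[OF refl]) (simp only: mult_ac)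
  also have "\<dots> = (\<Sum>J<N. \<Sum>J'<N. (w J * (1 / of_nat N) * e (y * real J')) * (\<Sum>r<N. e (real r * (real J - real J'))))"
    by (simp only: sum_distrib_left)
  also have "\<dots> = (\<Sum>J<N. \<Sum>J'<N. if J = J' then w J * e (y * real J) else 0)"
    by (intro sum.cong refl) (use Npos orth in \<open>auto simp: eq2[symmetric]\<close>)
  also have "\<dots> = (\<Sum>J<N. w J * e (y * real J))"
    by (simp add: sum.delta)
  finally have "(\<Sum>r<N. (\<Sum>J<N. w J * e (real r * real J)) * ((1 / of_nat N) * (\<Sum>J'<N. e ((y - real r) * real J')))) = (\<Sum>J<N. w J * e (y * real J))" .
  then show ?thesis unfolding Dk_def eq1 by (rule sym)
qed


lemma norm_cis_minus1: "norm (cis a - 1) = 2 * \<bar>sin (a / 2)\<bar>"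
proof -
  have "(norm (cis a - 1))^2 = (cos a - 1)^2 + (sin a)^2"
    by (simp add: cmod_power2)
  also have "\<dots> = 2 - 2 * cos a" by (simp add: power2_eq_square algebra_simps)
  also have "cos a = 1 - 2 * (sin (a/2))^2" using cos_double_sin[of "a/2"] by simp
  finally have "(norm (cis a - 1))^2 = (2 * \<bar>sin (a / 2)\<bar>)^2" by (simp add: power2_eq_square)
  then show ?thesis by (rule power2_eq_imp_eq) auto
qed

lemma sin_ge_half:
  fixes x :: real assumes "0 \<le> x" "x \<le> pi / 2" shows "x / 2 \<le> sin x"
proof (cases "x \<le> pi / 3")
  case True
  let ?f = "\<lambda>u. sin u - u / 2"
  have "\<And>u. \<lbrakk>0 \<le> u; u \<le> x\<rbrakk> \<Longrightarrow> (?f has_real_derivative cos u - 1/2) (at u)"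
    by (auto intro!: derivative_eq_intros)
  moreover have "\<And>u. \<lbrakk>0 \<le> u; u \<le> x\<rbrakk> \<Longrightarrow> cos u - 1/2 \<ge> 0"
  proof -
    fix u assume u: "0 \<le> u" "u \<le> x"
    have "cos (pi / 3) \<le> cos u" by (rule cos_monotone_0_pi_le) (use u True in auto)
    then show "cos u - 1/2 \<ge> 0" by (simp add: cos_60)
  qed
  ultimately have "?f 0 \<le> ?f x" by (intro DERIV_nonneg_imp_nondecreasing[OF assms(1)]) blast
  then show ?thesis by simp
next
  case False
  have "sin (pi / 3) \<le> sin x" by (rule sin_monotone_2pi_le) (use False assms in auto)
  moreover have "sin (pi / 3) = sqrt 3 / 2" by (simp add: sin_60)
  moreover have "sqrt 3 \<ge> 173 / 100" by (rule real_le_rsqrt) (simp add: power2_eq_square)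
  moreover have "x / 2 \<le> pi / 4" using assms by simp
  moreover have "pi / 4 \<le> 79 / 100" using pi_approx by simp
  ultimately show ?thesis by linarith
qed

lemma Dk_le1: "N > 0 \<Longrightarrow> norm (Dk N t) \<le> 1"
proof -
  assume N: "N > 0"
  have "norm (\<Sum>J<N. cis (2 * pi * t * real J / real N)) \<le> (\<Sum>J<N. norm (cis (2 * pi * t * real J / real N)))"
    by (rule norm_sum)
  also have "\<dots> = real N" by simp
  finally show ?thesis unfolding Dk_def using N by (simp add: norm_mult norm_divide divide_le_eq)
qed

lemma Dk_sin:
  assumes N: "N > 0" and s: "sin (pi * t / real N) \<noteq> 0"
  shows "norm (Dk N t) \<le> 1 / (real N * \<bar>sin (pi * t / real N)\<bar>)"
proof -
  define z where "z = cis (2 * pi * t / real N)"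
  have zJ: "cis (2 * pi * t * real J / real N) = z ^ J" for J
  proof -
    have "z ^ J = cis (real J * (2 * pi * t / real N))" unfolding z_def by (rule Complex.DeMoivre)
    then show ?thesis by (simp add: field_simps)
  qed
  have nz: "norm (z - 1) = 2 * \<bar>sin (pi * t / real N)\<bar>"
    unfolding z_def norm_cis_minus1 by simp
  then have z1: "z \<noteq> 1" using s by auto
  have "(\<Sum>J<N. cis (2 * pi * t * real J / real N)) = (z ^ N - 1) / (z - 1)"
    unfolding zJ by (rule geometric_sum[OF z1])
  moreover have n2: "norm (z ^ N - 1) \<le> 2"
  proof -
    have "norm (z ^ N - 1) \<le> norm (z ^ N) + norm (1::complex)" by (rule norm_triangle_ineq4)
    also have "\<dots> = 2" by (simp add: z_def norm_power)
    finally show ?thesis .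
  qed
  ultimately have "norm (\<Sum>J<N. cis (2 * pi * t * real J / real N)) = norm (z ^ N - 1) / (2 * \<bar>sin (pi * t / real N)\<bar>)"
    by (simp add: norm_divide nz)
  also have "\<dots> \<le> 2 / (2 * \<bar>sin (pi * t / real N)\<bar>)"
    by (rule divide_right_mono[OF n2]) simp
  finally have "norm (\<Sum>J<N. cis (2 * pi * t * real J / real N)) \<le> 2 / (2 * \<bar>sin (pi * t / real N)\<bar>)" .
  then show ?thesis unfolding Dk_def using N s
    by (simp add: norm_mult norm_divide field_simps)
qed

lemma Dk_per:
  assumes N: "N > 0" shows "Dk N (t + real N * of_int j) = Dk N t"
proof -
  have "cis (2 * pi * (t + real N * of_int j) * real J / real N) = cis (2 * pi * t * real J / real N)" for J
  proof -
    have "2 * pi * (t + real N * of_int j) * real J / real N = 2 * pi * t * real J / real N + 2 * pi * of_int (j * int J)"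
      using N by (simp add: field_simps)
    then show ?thesis by (simp add: cis_mult[symmetric])
  qed
  then show ?thesis unfolding Dk_def by simp
qed


lemma Dk_bound:
  assumes N2: "N \<ge> 2" and y: "0 \<le> y" "y < 1" and n: "n < N"
  shows "norm (Dk N (real n + y)) \<le> 2 / (real n + 1) + 2 / (real N - real n)"
proof -
  have N0: "N > 0" using N2 by simp
  have Nn: "real N - real n > 0" using n by simp
  have nn1: "2 / (real n + 1) \<ge> 0" by simp
  have nn2: "2 / (real N - real n) > 0" using Nn by simp
  consider "n = 0" | "n = N - 1" | "1 \<le> n" "n + 2 \<le> N" using n N2 by linarith
  then show ?thesis
  proof cases
    case 1
    have h: "norm (Dk N (real n + y)) \<le> 1" by (rule Dk_le1[OF N0])
    have "2 / (real n + 1) = 2" using 1 by simp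
    then show ?thesis using h nn2 by linarith
  next
    case 2
    then have "real N - real n = 1" using N2 by (simp add: of_nat_diff)
    then show ?thesis using Dk_le1[OF N0, of "real n + y"] nn1 by (simp; linarith)
  next
    case 3
    define t where "t = real n + y"
    define m where "m = min t (real N - t)"
    have m_ge: "m \<ge> min (real n) (real N - 1 - real n)" unfolding m_def t_def using y by auto
    have "real n \<ge> 1" "real N - 1 - real n \<ge> 1" using 3 by auto
    then have m1: "m \<ge> 1" using m_ge by linarith
    have mN: "m \<le> real N / 2" unfolding m_def by (simp add: min_def)
    have Npos: "real N > 0" using N0 by simp
    have sin_eq: "sin (pi * t / real N) = sin (pi * m / real N)"
    proof (cases "m = t")
      case True then show ?thesis by simp
    next
      case False
      then have "m = real N - t" unfolding m_def by auto
      then have "pi * m / real N = pi - pi * t / real N" using Npos by (simp add: field_simps flip: distrib_left)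
      then show ?thesis by (simp add: sin_pi_minus)
    qed
    have arg0: "0 \<le> pi * m / real N" using m1 Npos by simp
    have arg1: "pi * m / real N \<le> pi / 2" using mN Npos by (simp add: field_simps)
    have sge: "sin (pi * m / real N) \<ge> pi * m / real N / 2" by (rule sin_ge_half[OF arg0 arg1])
    have mpos: "pi * m / real N / 2 > 0" using m1 Npos by simp
    have spos: "\<bar>sin (pi * t / real N)\<bar> \<ge> pi * m / real N / 2" using sin_eq sge by simp
    have "norm (Dk N t) \<le> 1 / (real N * \<bar>sin (pi * t / real N)\<bar>)"
      by (rule Dk_sin[OF N0]) (use spos mpos in auto)
    also have "\<dots> \<le> 1 / (real N * (pi * m / real N / 2))"
    proof -
      have B: "real N * (pi * m / real N / 2) > 0" using m1 Npos by simp
      have BA: "real N * (pi * m / real N / 2) \<le> real N * \<bar>sin (pi * t / real N)\<bar>"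
        using spos Npos by (intro mult_left_mono) auto
      show ?thesis by (rule divide_left_mono[OF BA]) (use B BA in auto)
    qed
    also have "\<dots> = 2 / (pi * m)" using Npos by (simp add: field_simps)
    also have "\<dots> \<le> 1 / m"
    proof -
      have "2 / (pi * m) \<le> 2 / (2 * m)"
        by (rule divide_left_mono) (use m1 pi_gt3 in \<open>auto intro: mult_right_mono\<close>)
      then show ?thesis using m1 by simp
    qed
    also have "\<dots> \<le> 2 / (real n + 1) + 2 / (real N - real n)"
    proof (cases "real n \<le> real N - 1 - real n")
      case True
      then have "m \<ge> real n" using m_ge by simp
      then have "1 / m \<le> 1 / real n" using 3 by (intro divide_left_mono) auto
      also have "\<dots> \<le> 2 / (real n + 1)" using 3 by (simp add: field_simps)
      finally show ?thesis using nn2 by linarith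
    next
      case False
      then have "m \<ge> real N - 1 - real n" using m_ge by simp
      moreover have "real N - 1 - real n \<ge> 1" using 3 by linarith
      ultimately have "1 / m \<le> 1 / (real N - 1 - real n)" by (intro divide_left_mono) auto
      also have "\<dots> \<le> 2 / (real N - real n)" using 3 \<open>real N - 1 - real n \<ge> 1\<close> by (simp add: field_simps)
      finally show ?thesis using nn1 by linarith
    qed
    finally show ?thesis unfolding t_def .
  qed
qed

lemma harm_inv_sum: "(\<Sum>n<N. 1 / (real n + 1)) = harm N"
  unfolding harm_altdef by (simp add: inverse_eq_divide add.commute)

lemma harm_rev_sum: "(\<Sum>n<N. 1 / (real N - real n)) = harm N"
proof -
  have "(\<Sum>n<N. 1 / (real N - real n)) = (\<Sum>n<N. (\<lambda>i. 1 / (real i + 1)) (N - Suc n))"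
    by (intro sum.cong refl) (auto simp: of_nat_diff)
  also have "\<dots> = (\<Sum>n<N. 1 / (real n + 1))" by (rule sum.nat_diff_reindex)
  finally show ?thesis using harm_inv_sum by simp
qed

lemma ksum:
  assumes N2: "N \<ge> 2" and y: "0 \<le> y" "y < 1"
  shows "(\<Sum>n<N. norm (Dk N (real n + y))) \<le> 4 * harm N"
proof -
  have "(\<Sum>n<N. norm (Dk N (real n + y))) \<le> (\<Sum>n<N. 2 / (real n + 1) + 2 / (real N - real n))"
    by (rule sum_mono) (use Dk_bound[OF N2 y] in auto)
  also have "\<dots> = 2 * (\<Sum>n<N. 1 / (real n + 1)) + 2 * (\<Sum>n<N. 1 / (real N - real n))"
    by (simp add: sum.distrib sum_distrib_left)
  also have "\<dots> = 4 * harm N" unfolding harm_inv_sum harm_rev_sum by simp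
  finally show ?thesis .
qed

lemma harm_le_ln: "N \<ge> 1 \<Longrightarrow> harm N \<le> 1 + ln (real N)"
  using euler_mascheroni_sequence_decreasing[of 1 N] by (simp add: harm_def)

lemma ksum2:
  assumes N2: "N \<ge> 2" and K: "2 * K + 1 \<le> N"
  shows "(\<Sum>m\<in>{- int K..int K}. norm (Dk N (of_int m + y))) \<le> 4 * harm N"
proof -
  have N0: "N > 0" using N2 by simp
  define a where "a = \<lfloor>y\<rfloor>"
  define f where "f = y - of_int a"
  have f: "0 \<le> f" "f < 1" unfolding f_def a_def by linarith+
  define \<phi> where "\<phi> m = nat ((m + a) mod int N)" for m
  have phi_eq: "of_int m + y = real (\<phi> m) + f + real N * of_int ((m + a) div int N)" for m
  proof -
    have "m + a = (m + a) mod int N + int N * ((m + a) div int N)" by simp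
    then have "real_of_int (m + a) = real_of_int ((m + a) mod int N) + real N * of_int ((m + a) div int N)"
      by (metis of_int_add of_int_mult of_int_of_nat_eq)
    moreover have "real (\<phi> m) = real_of_int ((m + a) mod int N)" unfolding \<phi>_def using N0 by simp
    ultimately show ?thesis unfolding f_def by simp
  qed
  have Dk_eq: "norm (Dk N (of_int m + y)) = norm (Dk N (real (\<phi> m) + f))" for m
    unfolding phi_eq Dk_per[OF N0] ..
  have inj: "inj_on \<phi> {- int K..int K}"
  proof (rule inj_onI)
    fix m1 m2 assume m: "m1 \<in> {- int K..int K}" "m2 \<in> {- int K..int K}" and e: "\<phi> m1 = \<phi> m2"
    have "(m1 + a) mod int N = (m2 + a) mod int N"
      using e N0 unfolding \<phi>_def by (subst (asm) eq_nat_nat_iff) auto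
    then have "int N dvd (m1 + a) - (m2 + a)" by (simp add: mod_eq_dvd_iff)
    then have d: "int N dvd m1 - m2" by simp
    show "m1 = m2"
    proof (rule ccontr)
      assume "m1 \<noteq> m2"
      then have "m1 - m2 \<noteq> 0" by simp
      then have "\<bar>int N\<bar> \<le> \<bar>m1 - m2\<bar>" using dvd_imp_le_int d by blast
      moreover have "\<bar>m1 - m2\<bar> \<le> 2 * int K" using m by auto
      ultimately show False using K by linarith
    qed
  qed
  have img: "\<phi> ` {- int K..int K} \<subseteq> {..<N}"
    unfolding \<phi>_def using N0 by (auto simp: nat_less_iff)
  have "(\<Sum>m\<in>{- int K..int K}. norm (Dk N (of_int m + y))) = (\<Sum>m\<in>{- int K..int K}. norm (Dk N (real (\<phi> m) + f)))"
    using Dk_eq by simp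
  also have "\<dots> = (\<Sum>n\<in>\<phi> ` {- int K..int K}. norm (Dk N (real n + f)))"
    by (rule sum.reindex[OF inj, symmetric, unfolded comp_def])
  also have "\<dots> \<le> (\<Sum>n<N. norm (Dk N (real n + f)))"
    by (rule sum_mono2[OF _ img]) auto
  also have "\<dots> \<le> 4 * harm N" by (rule ksum[OF N2 f])
  finally show ?thesis .
qed

definition tp :: "(int \<times> complex) list \<Rightarrow> real \<Rightarrow> complex" where
  "tp xs x = (\<Sum>(t,c)\<leftarrow>xs. c * cis (2 * pi * of_int t * x))"

lemma tp_Nil[simp]: "tp [] x = 0" unfolding tp_def by simp

lemma tp_Cons[simp]: "tp ((t,c) # xs) x = c * cis (2 * pi * of_int t * x) + tp xs x"
  unfolding tp_def by simp

lemma tp_append: "tp (xs @ ys) x = tp xs x + tp ys x"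
  unfolding tp_def by simp

definition tpshift :: "int \<Rightarrow> complex \<Rightarrow> (int \<times> complex) list \<Rightarrow> (int \<times> complex) list" where
  "tpshift t c ys = map (\<lambda>(t', c'). (t + t', c * c')) ys"

lemma tp_shift: "tp (tpshift t c ys) x = c * cis (2 * pi * of_int t * x) * tp ys x"
proof (induction ys)
  case Nil then show ?case by (simp add: tpshift_def)
next
  case (Cons a ys)
  obtain t' c' where a: "a = (t', c')" by (cases a)
  have "cis (2 * pi * of_int (t + t') * x) = cis (2 * pi * of_int t * x) * cis (2 * pi * of_int t' * x)"
    unfolding cis_mult by (simp add: algebra_simps)
  then show ?case using Cons unfolding tpshift_def a by (simp add: algebra_simps)
qed

definition tpmult :: "(int \<times> complex) list \<Rightarrow> (int \<times> complex) list \<Rightarrow> (int \<times> complex) list" where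
  "tpmult xs ys = concat (map (\<lambda>(t, c). tpshift t c ys) xs)"

lemma tp_mult: "tp (tpmult xs ys) x = tp xs x * tp ys x"
proof (induction xs)
  case Nil then show ?case by (simp add: tpmult_def)
next
  case (Cons a xs)
  obtain t c where a: "a = (t, c)" by (cases a)
  have "tp (tpmult (a # xs) ys) x = tp (tpshift t c ys) x + tp (tpmult xs ys) x"
    unfolding tpmult_def a by (simp add: tp_append)
  then show ?case using Cons unfolding a tp_shift by (simp add: algebra_simps)
qed

lemma tp_smult: "tp (map (\<lambda>(t, c). (t, a * c)) xs) x = a * tp xs x"
  by (induction xs) (auto simp: algebra_simps)

lemma rpf_tp:
  fixes f :: "complex \<Rightarrow> real"
  assumes "real_polynomial_function f"
  shows "\<exists>xs. \<forall>x. complex_of_real (f (cis (2 * pi * x))) = tp xs x"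
  using assms
proof (induction rule: real_polynomial_function.induct)
  case (linear f)
  interpret bounded_linear f by (rule linear)
  define a where "a = f 1"
  define c where "c = f \<i>"
  have fz: "f z = Re z * a + Im z * c" for z
  proof -
    have "z = Re z *\<^sub>R 1 + Im z *\<^sub>R \<i>" by (simp add: complex_eq_iff)
    then have "f z = f (Re z *\<^sub>R 1 + Im z *\<^sub>R \<i>)" by simp
    also have "\<dots> = Re z * a + Im z * c" unfolding add scaleR a_def c_def by simp
    finally show ?thesis .
  qed
  define xs where "xs = [(1::int, (complex_of_real a - \<i> * complex_of_real c) / 2), (-1, (complex_of_real a + \<i> * complex_of_real c) / 2)]"
  show ?case
  proof (rule exI[where x=xs], rule allI)
    fix x
    show "complex_of_real (f (cis (2 * pi * x))) = tp xs x"
      unfolding fz xs_def by (simp add: complex_eq_iff algebra_simps add_divide_distrib[symmetric])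
  qed
next
  case (const c)
  show ?case by (rule exI[where x="[(0, complex_of_real c)]"]) simp
next
  case (add f g)
  then obtain xs ys where "\<forall>x. complex_of_real (f (cis (2 * pi * x))) = tp xs x" "\<forall>x. complex_of_real (g (cis (2 * pi * x))) = tp ys x"
    by blast
  then show ?case by (intro exI[where x="xs @ ys"]) (simp add: tp_append)
next
  case (mult f g)
  then obtain xs ys where "\<forall>x. complex_of_real (f (cis (2 * pi * x))) = tp xs x" "\<forall>x. complex_of_real (g (cis (2 * pi * x))) = tp ys x"
    by blast
  then show ?case by (intro exI[where x="tpmult xs ys"]) (simp add: tp_mult)
qed

locale ssm =
  fixes b :: nat and D :: "nat set" and x0 :: real and p :: "nat \<Rightarrow> real" and \<mu> :: "real measure"
  assumes b3: "b \<ge> 3" and Dsub: "D \<subseteq> {0..b-1}" and pnn: "\<forall>i\<in>D. p i \<ge> 0"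
    and psum: "(\<Sum>i\<in>D. p i) = 1" and ss: "self_similar_md b D x0 p \<mu>"
begin

lemma sets_mu[simp, measurable_cong]: "sets \<mu> = sets borel"
  using ss unfolding self_similar_md_def by auto

lemma space_mu[simp]: "space \<mu> = UNIV"
  using sets_eq_imp_space_eq[OF sets_mu] by simp

lemma prob: "prob_space \<mu>"
  using ss unfolding self_similar_md_def by auto

lemma rd: "real_distribution \<mu>"
  unfolding real_distribution_def real_distribution_axioms_def using prob by auto

lemma finD: "finite D"
  using Dsub finite_subset by blast

lemma mdmap_meas[measurable]: "mdmap b x0 i \<in> borel_measurable borel"
  unfolding mdmap_def by measurable

lemma comp_meas[measurable]: "u \<in> borel_measurable borel \<Longrightarrow> (\<lambda>x. u (mdmap b x0 i x)) \<in> borel_measurable \<mu>"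
  by (subst measurable_cong_sets[OF sets_mu refl]) (rule measurable_compose[OF mdmap_meas])

lemma bm_mu: "u \<in> borel_measurable borel \<Longrightarrow> u \<in> borel_measurable \<mu>"
  by (subst measurable_cong_sets[OF sets_mu refl]) simp

lemma cis_meas[measurable]: "cis \<in> borel_measurable borel"
  by (rule borel_measurable_continuous_onI) (simp add: continuous_on_cis continuous_on_id)

lemma ss_meas: "A \<in> sets borel \<Longrightarrow> measure \<mu> A = (\<Sum>i\<in>D. p i * measure \<mu> (mdmap b x0 i -` A))"
  using ss unfolding self_similar_md_def by auto

lemma ss_nn:
  fixes f :: "real \<Rightarrow> ennreal"
  assumes f: "f \<in> borel_measurable borel"
  shows "(\<integral>\<^sup>+x. f x \<partial>\<mu>) = (\<Sum>i\<in>D. ennreal (p i) * (\<integral>\<^sup>+x. f (mdmap b x0 i x) \<partial>\<mu>))"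
  using f
proof (induction rule: borel_measurable_induct)
  case (cong f g)
  then show ?case by simp
next
  case (set A)
  interpret prob_space \<mu> by (rule prob)
  have A: "A \<in> sets \<mu>" using set by simp
  have pre: "mdmap b x0 i -` A \<in> sets borel" for i
    using measurable_sets_borel[OF mdmap_meas set] by simp
  have "(\<integral>\<^sup>+x. indicator A x \<partial>\<mu>) = ennreal (measure \<mu> A)"
    using A by (simp add: emeasure_eq_measure)
  also have "\<dots> = ennreal (\<Sum>i\<in>D. p i * measure \<mu> (mdmap b x0 i -` A))"
    using ss_meas[OF set] by simp
  also have "\<dots> = (\<Sum>i\<in>D. ennreal (p i * measure \<mu> (mdmap b x0 i -` A)))"
    by (rule sum_ennreal[symmetric]) (use pnn in auto)
  also have "\<dots> = (\<Sum>i\<in>D. ennreal (p i) * (\<integral>\<^sup>+x. indicator A (mdmap b x0 i x) \<partial>\<mu>))"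
  proof (rule sum.cong[OF refl])
    fix i assume "i \<in> D"
    have "(\<integral>\<^sup>+x. indicator A (mdmap b x0 i x) \<partial>\<mu>) = (\<integral>\<^sup>+x. indicator (mdmap b x0 i -` A) x \<partial>\<mu>)"
      by (simp add: indicator_def)
    also have "\<dots> = ennreal (measure \<mu> (mdmap b x0 i -` A))"
      using pre[of i] by (simp add: emeasure_eq_measure)
    finally show "ennreal (p i * measure \<mu> (mdmap b x0 i -` A)) = ennreal (p i) * (\<integral>\<^sup>+x. indicator A (mdmap b x0 i x) \<partial>\<mu>)"
      using pnn \<open>i \<in> D\<close> by (simp add: ennreal_mult)
  qed
  finally show ?case .
next
  case (mult u c)
  have "(\<integral>\<^sup>+x. c * u x \<partial>\<mu>) = c * (\<integral>\<^sup>+x. u x \<partial>\<mu>)"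
    using mult by (simp add: nn_integral_cmult bm_mu)
  also have "\<dots> = (\<Sum>i\<in>D. ennreal (p i) * (\<integral>\<^sup>+x. c * u (mdmap b x0 i x) \<partial>\<mu>))"
    unfolding mult.IH sum_distrib_left
    by (rule sum.cong[OF refl]) (simp add: nn_integral_cmult comp_meas[OF mult.hyps(2)] ac_simps)
  finally show ?case .
next
  case (add u v)
  have "(\<integral>\<^sup>+x. v x + u x \<partial>\<mu>) = (\<integral>\<^sup>+x. v x \<partial>\<mu>) + (\<integral>\<^sup>+x. u x \<partial>\<mu>)"
    using add by (simp add: nn_integral_add bm_mu)
  also have "\<dots> = (\<Sum>i\<in>D. ennreal (p i) * (\<integral>\<^sup>+x. v (mdmap b x0 i x) + u (mdmap b x0 i x) \<partial>\<mu>))"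
    unfolding add.IH sum.distrib[symmetric]
    by (rule sum.cong[OF refl]) (simp add: nn_integral_add comp_meas[OF add.hyps(1)] comp_meas[OF add.hyps(3)] distrib_left)
  finally show ?case .
next
  case (seq U)
  have inc: "incseq (\<lambda>n x. U n (mdmap b x0 i x))" for i
    using \<open>incseq U\<close> unfolding incseq_def le_fun_def by blast
  have "(\<integral>\<^sup>+x. (SUP n. U n) x \<partial>\<mu>) = (SUP n. \<integral>\<^sup>+x. U n x \<partial>\<mu>)"
    unfolding SUP_apply by (rule nn_integral_monotone_convergence_SUP) (use seq in \<open>auto intro: bm_mu\<close>)
  also have "\<dots> = (SUP n. \<Sum>i\<in>D. ennreal (p i) * (\<integral>\<^sup>+x. U n (mdmap b x0 i x) \<partial>\<mu>))"
    using seq.IH by simp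
  also have "\<dots> = (\<Sum>i\<in>D. SUP n. ennreal (p i) * (\<integral>\<^sup>+x. U n (mdmap b x0 i x) \<partial>\<mu>))"
  proof (rule ennreal_SUP_sum)
    fix i assume "i \<in> D"
    show "incseq (\<lambda>n. ennreal (p i) * (\<integral>\<^sup>+x. U n (mdmap b x0 i x) \<partial>\<mu>))"
      using inc[of i] unfolding incseq_def
      by (auto intro!: mult_left_mono nn_integral_mono simp: le_fun_def)
  qed
  also have "\<dots> = (\<Sum>i\<in>D. ennreal (p i) * (\<integral>\<^sup>+x. (SUP n. U n) (mdmap b x0 i x) \<partial>\<mu>))"
  proof (rule sum.cong[OF refl])
    fix i assume "i \<in> D"
    have "(\<integral>\<^sup>+x. (SUP n. U n) (mdmap b x0 i x) \<partial>\<mu>) = (SUP n. \<integral>\<^sup>+x. U n (mdmap b x0 i x) \<partial>\<mu>)"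
      unfolding SUP_apply by (rule nn_integral_monotone_convergence_SUP[OF inc]) (use seq in \<open>auto intro: comp_meas\<close>)
    then show "(SUP n. ennreal (p i) * (\<integral>\<^sup>+x. U n (mdmap b x0 i x) \<partial>\<mu>)) = ennreal (p i) * (\<integral>\<^sup>+x. (SUP n. U n) (mdmap b x0 i x) \<partial>\<mu>)"
      by (simp add: SUP_mult_left_ennreal)
  qed
  finally show ?case .
qed

lemma ss_int:
  fixes g :: "real \<Rightarrow> real"
  assumes g[measurable]: "g \<in> borel_measurable borel" and B: "\<And>x. \<bar>g x\<bar> \<le> B"
  shows "(\<integral>x. g x \<partial>\<mu>) = (\<Sum>i\<in>D. p i * (\<integral>x. g (mdmap b x0 i x) \<partial>\<mu>))"
proof -
  interpret prob_space \<mu> by (rule prob)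
  have p1: "prob UNIV = 1" using prob_space by simp
  define h where "h x = g x + B" for x
  have h0: "h x \<ge> 0" for x using B[of x] by (simp add: h_def)
  have hm[measurable]: "h \<in> borel_measurable borel" unfolding h_def by measurable
  have hb: "h x \<le> 2 * B" for x using B[of x] by (simp add: h_def)
  have gi: "integrable \<mu> g" by (rule integrable_const_bound[where B=B]) (use B in \<open>auto intro: bm_mu\<close>)
  have gii: "integrable \<mu> (\<lambda>x. g (mdmap b x0 i x))" for i
    by (rule integrable_const_bound[where B=B]) (use B in \<open>auto intro: comp_meas\<close>)
  have fin: "(\<integral>\<^sup>+x. ennreal (h (mdmap b x0 i x)) \<partial>\<mu>) < top" for i
  proof -
    have "(\<integral>\<^sup>+x. ennreal (h (mdmap b x0 i x)) \<partial>\<mu>) \<le> (\<integral>\<^sup>+x. ennreal (2 * B) \<partial>\<mu>)"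
      by (rule nn_integral_mono) (use hb in \<open>auto intro: ennreal_leI\<close>)
    also have "\<dots> = ennreal (2 * B)" using emeasure_space_1 by simp
    finally show ?thesis using order.strict_trans1 by fastforce
  qed
  have "(\<integral>x. h x \<partial>\<mu>) = enn2real (\<integral>\<^sup>+x. ennreal (h x) \<partial>\<mu>)"
    by (rule integral_eq_nn_integral) (use h0 in \<open>auto intro: bm_mu\<close>)
  also have "(\<integral>\<^sup>+x. ennreal (h x) \<partial>\<mu>) = (\<Sum>i\<in>D. ennreal (p i) * (\<integral>\<^sup>+x. ennreal (h (mdmap b x0 i x)) \<partial>\<mu>))"
    by (rule ss_nn) measurable
  also have "enn2real \<dots> = (\<Sum>i\<in>D. p i * enn2real (\<integral>\<^sup>+x. ennreal (h (mdmap b x0 i x)) \<partial>\<mu>))"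
    using fin pnn by (subst enn2real_sum) (auto simp: enn2real_mult ennreal_mult_less_top)
  also have "\<dots> = (\<Sum>i\<in>D. p i * (\<integral>x. h (mdmap b x0 i x) \<partial>\<mu>))"
  proof (rule sum.cong[OF refl])
    fix i
    have "(\<integral>x. h (mdmap b x0 i x) \<partial>\<mu>) = enn2real (\<integral>\<^sup>+x. ennreal (h (mdmap b x0 i x)) \<partial>\<mu>)"
      by (rule integral_eq_nn_integral) (use h0 in \<open>auto intro: comp_meas\<close>)
    then show "p i * enn2real (\<integral>\<^sup>+x. ennreal (h (mdmap b x0 i x)) \<partial>\<mu>) = p i * (\<integral>x. h (mdmap b x0 i x) \<partial>\<mu>)"
      by simp
  qed
  finally have eq: "(\<integral>x. h x \<partial>\<mu>) = (\<Sum>i\<in>D. p i * (\<integral>x. h (mdmap b x0 i x) \<partial>\<mu>))" .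
  have "(\<integral>x. h x \<partial>\<mu>) = (\<integral>x. g x \<partial>\<mu>) + B"
    unfolding h_def using gi p1 by simp
  moreover have "(\<integral>x. h (mdmap b x0 i x) \<partial>\<mu>) = (\<integral>x. g (mdmap b x0 i x) \<partial>\<mu>) + B" for i
    unfolding h_def using gii[of i] p1 by simp
  ultimately have "(\<integral>x. g x \<partial>\<mu>) + B = (\<Sum>i\<in>D. p i * (\<integral>x. g (mdmap b x0 i x) \<partial>\<mu>)) + (\<Sum>i\<in>D. p i) * B"
    using eq by (simp add: distrib_left sum.distrib sum_distrib_right)
  then show ?thesis using psum by simp
qed

lemma ss_cint:
  fixes g :: "real \<Rightarrow> complex"
  assumes g[measurable]: "g \<in> borel_measurable borel" and B: "\<And>x. cmod (g x) \<le> B"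
  shows "(\<integral>x. g x \<partial>\<mu>) = (\<Sum>i\<in>D. complex_of_real (p i) * (\<integral>x. g (mdmap b x0 i x) \<partial>\<mu>))"
proof (rule complex_eqI)
  interpret prob_space \<mu> by (rule prob)
  have gi: "integrable \<mu> g" by (rule integrable_const_bound[where B=B]) (use B in \<open>auto intro: bm_mu\<close>)
  have gii: "integrable \<mu> (\<lambda>x. g (mdmap b x0 i x))" for i
    by (rule integrable_const_bound[where B=B]) (use B in \<open>auto intro: comp_meas\<close>)
  have "Re (\<integral>x. g x \<partial>\<mu>) = (\<integral>x. Re (g x) \<partial>\<mu>)" using gi by simp
  also have "\<dots> = (\<Sum>i\<in>D. p i * (\<integral>x. Re (g (mdmap b x0 i x)) \<partial>\<mu>))"
    by (rule ss_int[where B=B]) (auto intro: order_trans[OF abs_Re_le_cmod B])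
  finally show "Re (\<integral>x. g x \<partial>\<mu>) = Re (\<Sum>i\<in>D. complex_of_real (p i) * (\<integral>x. g (mdmap b x0 i x) \<partial>\<mu>))"
    using gii by (simp add: Re_sum)
  have "Im (\<integral>x. g x \<partial>\<mu>) = (\<integral>x. Im (g x) \<partial>\<mu>)" using gi by simp
  also have "\<dots> = (\<Sum>i\<in>D. p i * (\<integral>x. Im (g (mdmap b x0 i x)) \<partial>\<mu>))"
    by (rule ss_int[where B=B]) (auto intro: order_trans[OF abs_Im_le_cmod B])
  finally show "Im (\<integral>x. g x \<partial>\<mu>) = Im (\<Sum>i\<in>D. complex_of_real (p i) * (\<integral>x. g (mdmap b x0 i x) \<partial>\<mu>))"
    using gii by (simp add: Im_sum)
qed

definition Pb :: "real \<Rightarrow> complex" where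
  "Pb \<eta> = (\<Sum>i\<in>D. complex_of_real (p i) * cis (2 * pi * \<eta> * real i / real b))"

lemma F_rel: "fourier \<mu> \<eta> = cis (2 * pi * \<eta> * x0 * (1 - 1 / real b)) * Pb \<eta> * fourier \<mu> (\<eta> / real b)"
proof -
  have bpos: "real b > 0" using b3 by simp
  have pt: "cis (2 * pi * \<eta> * mdmap b x0 i x) = cis (2 * pi * \<eta> * x0 * (1 - 1 / real b)) * cis (2 * pi * \<eta> * real i / real b) * cis (2 * pi * (\<eta> / real b) * x)" for i x
  proof -
    have "2 * pi * \<eta> * mdmap b x0 i x = 2 * pi * \<eta> * x0 * (1 - 1 / real b) + 2 * pi * \<eta> * real i / real b + 2 * pi * (\<eta> / real b) * x"
      unfolding mdmap_def using bpos by (simp add: field_simps)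
    then show ?thesis unfolding cis_mult by simp
  qed
  have "fourier \<mu> \<eta> = (\<Sum>i\<in>D. complex_of_real (p i) * (\<integral>x. cis (2 * pi * \<eta> * mdmap b x0 i x) \<partial>\<mu>))"
    unfolding fourier_def by (rule ss_cint[where B=1]) auto
  also have "\<dots> = (\<Sum>i\<in>D. complex_of_real (p i) * (cis (2 * pi * \<eta> * x0 * (1 - 1 / real b)) * cis (2 * pi * \<eta> * real i / real b) * fourier \<mu> (\<eta> / real b)))"
    unfolding pt fourier_def by (simp add: mult.assoc)
  also have "\<dots> = cis (2 * pi * \<eta> * x0 * (1 - 1 / real b)) * Pb \<eta> * fourier \<mu> (\<eta> / real b)"
    unfolding Pb_def by (simp add: sum_distrib_left sum_distrib_right ac_simps)
  finally show ?thesis .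
qed

lemma F_norm_rel: "norm (fourier \<mu> \<eta>) = norm (Pb \<eta>) * norm (fourier \<mu> (\<eta> / real b))"
  by (subst F_rel) (simp add: norm_mult)


definition qd :: "nat \<Rightarrow> real" where "qd i = (if i \<in> D then p i else 0)"

lemma Pb_alt: "Pb \<eta> = (\<Sum>i<b. complex_of_real (qd i) * cis (2 * pi * \<eta> * real i / real b))"
proof -
  have Db: "D \<subseteq> {..<b}" using Dsub b3 by auto
  have "(\<Sum>i<b. complex_of_real (qd i) * cis (2 * pi * \<eta> * real i / real b)) = (\<Sum>i\<in>D. complex_of_real (qd i) * cis (2 * pi * \<eta> * real i / real b))"
    by (rule sum.mono_neutral_right) (use Db in \<open>auto simp: qd_def\<close>)
  also have "\<dots> = Pb \<eta>" unfolding Pb_def by (rule sum.cong) (auto simp: qd_def)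
  finally show ?thesis by simp
qed

lemma sum_group_b:
  fixes f :: "nat \<Rightarrow> complex"
  shows "(\<Sum>K<b * N. f K) = (\<Sum>J<N. \<Sum>i<b. f (J * b + i))"
proof -
  have "(\<Sum>K<b * N. f K) = (\<Sum>J<N. sum f {J * b..<J * b + b})"
    using sum.nat_group[of f b N] by (simp add: mult.commute)
  also have "\<dots> = (\<Sum>J<N. \<Sum>i<b. f (J * b + i))"
  proof (rule sum.cong[OF refl])
    fix J
    show "sum f {J * b..<J * b + b} = (\<Sum>i<b. f (J * b + i))"
      using sum.shift_bounds_nat_ivl[of f 0 "J*b" b] by (simp add: add.commute atLeast0LessThan)
  qed
  finally show ?thesis .
qed

lemma iter:
  "\<exists>w::nat \<Rightarrow> complex. \<forall>\<xi>. norm (fourier \<mu> \<xi>) =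
     norm (\<Sum>J<b^k. w J * cis (2 * pi * \<xi> * real J / real (b^k))) * norm (fourier \<mu> (\<xi> / real (b^k)))"
proof (induction k)
  case 0
  show ?case by (rule exI[where x="\<lambda>_. 1"]) simp
next
  case (Suc k)
  then obtain w where w: "\<And>\<xi>. norm (fourier \<mu> \<xi>) =
     norm (\<Sum>J<b^k. w J * cis (2 * pi * \<xi> * real J / real (b^k))) * norm (fourier \<mu> (\<xi> / real (b^k)))"
    by blast
  define N where "N = b^k"
  have Npos: "real N > 0" using b3 by (simp add: N_def)
  have bpos: "real b > 0" using b3 by simp
  define w' where "w' K = w (K div b) * complex_of_real (qd (K mod b))" for K
  show ?case
  proof (rule exI[where x=w'], rule allI)
    fix \<xi>
    have prod: "(\<Sum>J<N. w J * cis (2 * pi * \<xi> * real J / real N)) * Pb (\<xi> / real N) =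
        (\<Sum>K<b^Suc k. w' K * cis (2 * pi * \<xi> * real K / real (b^Suc k)))"
    proof -
      have "(\<Sum>J<N. w J * cis (2 * pi * \<xi> * real J / real N)) * Pb (\<xi> / real N) =
          (\<Sum>J<N. \<Sum>i<b. w J * complex_of_real (qd i) * cis (2 * pi * \<xi> * real (J * b + i) / (real b * real N)))"
        unfolding Pb_alt sum_product
      proof (intro sum.cong refl)
        fix J i
        have "cis (2 * pi * \<xi> * real J / real N) * cis (2 * pi * (\<xi> / real N) * real i / real b) = cis (2 * pi * \<xi> * real (J * b + i) / (real b * real N))"
          unfolding cis_mult using Npos bpos by (simp add: field_simps)
        then show "w J * cis (2 * pi * \<xi> * real J / real N) * (complex_of_real (qd i) * cis (2 * pi * (\<xi> / real N) * real i / real b)) =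
           w J * complex_of_real (qd i) * cis (2 * pi * \<xi> * real (J * b + i) / (real b * real N))"
          by (metis (no_types, lifting) mult.assoc mult.left_commute)
      qed
      also have "\<dots> = (\<Sum>K<b * N. w' K * cis (2 * pi * \<xi> * real K / (real b * real N)))"
        unfolding sum_group_b
      proof (intro sum.cong refl)
        fix J i assume "J \<in> {..<N}" "i \<in> {..<b}"
        then have "(J * b + i) div b = J" "(J * b + i) mod b = i" by auto
        then show "w J * complex_of_real (qd i) * cis (2 * pi * \<xi> * real (J * b + i) / (real b * real N)) =
            w' (J * b + i) * cis (2 * pi * \<xi> * real (J * b + i) / (real b * real N))"
          unfolding w'_def by simp
      qed
      finally show ?thesis by (simp add: N_def)
    qed
    have eq: "\<xi> / real N / real b = \<xi> / real (b ^ Suc k)" by (simp add: N_def)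
    have e1: "norm (fourier \<mu> \<xi>) = norm (\<Sum>J<N. w J * cis (2 * pi * \<xi> * real J / real N)) * (norm (Pb (\<xi> / real N)) * norm (fourier \<mu> (\<xi> / real (b ^ Suc k))))"
      using w[of \<xi>] F_norm_rel[of "\<xi> / real N"] unfolding eq N_def by (simp add: mult.commute)
    have e2: "norm (\<Sum>J<N. w J * cis (2 * pi * \<xi> * real J / real N)) * norm (Pb (\<xi> / real N)) = norm (\<Sum>K<b^Suc k. w' K * cis (2 * pi * \<xi> * real K / real (b^Suc k)))"
      by (simp only: norm_mult[symmetric] prod)
    show "norm (fourier \<mu> \<xi>) = norm (\<Sum>K<b^Suc k. w' K * cis (2 * pi * \<xi> * real K / real (b^Suc k))) * norm (fourier \<mu> (\<xi> / real (b^Suc k)))"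
      unfolding e1 mult.assoc[symmetric] e2 ..
  qed
qed

end

definition Wf :: "(nat \<Rightarrow> complex) \<Rightarrow> nat \<Rightarrow> real \<Rightarrow> complex" where
  "Wf w N \<xi> = (\<Sum>J<N. w J * cis (2 * pi * \<xi> * real J / real N))"

lemma Wf_per:
  assumes N: "N > 0" shows "Wf w N (real r + of_int t * real N) = Wf w N (real r)"
proof -
  have "cis (2 * pi * (real r + of_int t * real N) * real J / real N) = cis (2 * pi * real r * real J / real N)" for J
  proof -
    have "2 * pi * (real r + of_int t * real N) * real J / real N = 2 * pi * real r * real J / real N + 2 * pi * of_int (t * int J)"
      using N by (simp add: field_simps)
    then show ?thesis by (simp add: cis_mult[symmetric])
  qed
  then show ?thesis unfolding Wf_def by simp
qed

lemma Sset: "X \<ge> 0 \<Longrightarrow> {m::int. \<bar>real_of_int m\<bar> \<le> X} = {- \<lfloor>X\<rfloor>..\<lfloor>X\<rfloor>}"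
proof (intro set_eqI iffI)
  fix m :: int assume "m \<in> {m. \<bar>real_of_int m\<bar> \<le> X}"
  then have "real_of_int m \<le> X" "real_of_int (- m) \<le> X" by auto
  then have "m \<le> \<lfloor>X\<rfloor>" "- m \<le> \<lfloor>X\<rfloor>" by (simp_all add: le_floor_iff del: of_int_minus)
  then show "m \<in> {- \<lfloor>X\<rfloor>..\<lfloor>X\<rfloor>}" by auto
next
  fix m :: int assume "m \<in> {- \<lfloor>X\<rfloor>..\<lfloor>X\<rfloor>}"
  then have "m \<le> \<lfloor>X\<rfloor>" "- m \<le> \<lfloor>X\<rfloor>" by auto
  then have "real_of_int m \<le> X" "real_of_int (- m) \<le> X" by (simp_all add: le_floor_iff del: of_int_minus)
  then show "m \<in> {m. \<bar>real_of_int m\<bar> \<le> X}" by auto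
qed

context ssm
begin

lemma fourier_char: "fourier \<mu> \<xi> = char \<mu> (2 * pi * \<xi>)"
  unfolding fourier_def char_def cis_conv_exp by simp

lemma normF_le1: "norm (fourier \<mu> \<xi>) \<le> 1"
  unfolding fourier_char using real_distribution.cmod_char_le_1[OF rd] by simp

lemma F0: "fourier \<mu> 0 = 1"
  unfolding fourier_char using real_distribution.char_zero[OF rd] by simp

lemma F_cont: "isCont (fourier \<mu>) \<xi>"
proof -
  have "isCont (\<lambda>\<xi>. char \<mu> (2 * pi * \<xi>)) \<xi>"
    by (rule isCont_o2[OF _ real_distribution.isCont_char[OF rd]]) (intro continuous_intros)
  then show ?thesis unfolding fourier_char[abs_def] .
qed

lemma upper:
  assumes N: "N = b^k" "k \<ge> 1" and K: "2 * nat \<lfloor>X\<rfloor> + 1 \<le> N" and X: "X \<ge> 0"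
    and w: "\<And>\<xi>. norm (fourier \<mu> \<xi>) = norm (Wf w N \<xi>) * norm (fourier \<mu> (\<xi> / real N))"
  shows "l1sum \<mu> \<theta> X \<le> 4 * harm N * (\<Sum>r<N. norm (Wf w N (real r)))"
proof -
  have N2: "N \<ge> 2"
  proof -
    have "b ^ 1 \<le> b ^ k" by (rule power_increasing) (use N b3 in auto)
    then show ?thesis using N b3 by simp
  qed
  have N0: "N > 0" using N2 by simp
  define K where "K = nat \<lfloor>X\<rfloor>"
  have SK: "{m::int. \<bar>real_of_int m\<bar> \<le> X} = {- int K..int K}" unfolding K_def using Sset[OF X] X by simp
  have "l1sum \<mu> \<theta> X = (\<Sum>m\<in>{- int K..int K}. norm (fourier \<mu> (real_of_int m + \<theta>)))"
    unfolding l1sum_def SK ..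
  also have "\<dots> \<le> (\<Sum>m\<in>{- int K..int K}. \<Sum>r<N. norm (Wf w N (real r)) * norm (Dk N (of_int m + (\<theta> - real r))))"
  proof (rule sum_mono)
    fix m
    have "norm (fourier \<mu> (real_of_int m + \<theta>)) \<le> norm (Wf w N (real_of_int m + \<theta>))"
      using w[of "real_of_int m + \<theta>"] normF_le1[of "(real_of_int m + \<theta>) / real N"]
      by (simp add: mult_left_le)
    also have "Wf w N (real_of_int m + \<theta>) = (\<Sum>r<N. Wf w N (real r) * Dk N (real_of_int m + \<theta> - real r))"
      unfolding Wf_def by (rule dft[OF N0])
    also have "norm \<dots> \<le> (\<Sum>r<N. norm (Wf w N (real r)) * norm (Dk N (of_int m + (\<theta> - real r))))"
      by (rule order_trans[OF norm_sum]) (simp add: norm_mult add_diff_eq)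
    finally show "norm (fourier \<mu> (real_of_int m + \<theta>)) \<le> (\<Sum>r<N. norm (Wf w N (real r)) * norm (Dk N (of_int m + (\<theta> - real r))))" .
  qed
  also have "\<dots> = (\<Sum>r<N. norm (Wf w N (real r)) * (\<Sum>m\<in>{- int K..int K}. norm (Dk N (of_int m + (\<theta> - real r)))))"
    by (subst sum.swap) (simp add: sum_distrib_left)
  also have "\<dots> \<le> (\<Sum>r<N. norm (Wf w N (real r)) * (4 * harm N))"
    by (intro sum_mono mult_left_mono ksum2[OF N2]) (use K K_def in auto)
  also have "\<dots> = 4 * harm N * (\<Sum>r<N. norm (Wf w N (real r)))"
    by (simp add: sum_distrib_left sum_distrib_right mult_ac)
  finally show ?thesis .
qed

lemma lower:
  assumes N: "N = b^k"
    and w: "\<And>\<xi>. norm (fourier \<mu> \<xi>) = norm (Wf w N \<xi>) * norm (fourier \<mu> (\<xi> / real N))"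
    and c: "\<And>\<phi>. 0 \<le> \<phi> \<Longrightarrow> \<phi> \<le> 1 \<Longrightarrow> c \<le> (\<Sum>t\<in>{- int T..int T}. norm (fourier \<mu> (\<phi> + of_int t)))"
  shows "c * (\<Sum>r<N. norm (Wf w N (real r))) \<le> l1sum \<mu> 0 (real ((T + 1) * N))"
proof -
  have N0: "N > 0" using N b3 by simp
  have Npos: "real N > 0" using N0 by simp
  define g where "g = (\<lambda>(r::nat, t::int). int r + t * int N)"
  have key: "norm (Wf w N (real r)) * norm (fourier \<mu> (real r / real N + of_int t)) = norm (fourier \<mu> (of_int (g (r, t))))" for r t
  proof -
    have "of_int (g (r, t)) = real r + of_int t * real N" unfolding g_def by simp
    moreover have "(real r + of_int t * real N) / real N = real r / real N + of_int t"
      using Npos by (simp add: field_simps)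
    ultimately show ?thesis using w[of "of_int (g (r, t))"] Wf_per[OF N0, of w r t] by simp
  qed
  have "c * (\<Sum>r<N. norm (Wf w N (real r))) = (\<Sum>r<N. norm (Wf w N (real r)) * c)"
    by (simp add: sum_distrib_left mult_ac)
  also have "\<dots> \<le> (\<Sum>r<N. norm (Wf w N (real r)) * (\<Sum>t\<in>{- int T..int T}. norm (fourier \<mu> (real r / real N + of_int t))))"
  proof (rule sum_mono, rule mult_left_mono)
    fix r assume "r \<in> {..<N}"
    then show "c \<le> (\<Sum>t\<in>{- int T..int T}. norm (fourier \<mu> (real r / real N + of_int t)))"
      using Npos by (intro c) auto
  qed simp
  also have "\<dots> = (\<Sum>r<N. \<Sum>t\<in>{- int T..int T}. norm (fourier \<mu> (of_int (g (r, t)))))"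
    by (simp add: sum_distrib_left key)
  also have "\<dots> = (\<Sum>x\<in>{..<N} \<times> {- int T..int T}. norm (fourier \<mu> (of_int (g x))))"
    by (subst sum.cartesian_product) (simp add: case_prod_unfold)
  also have "\<dots> = (\<Sum>m\<in>g ` ({..<N} \<times> {- int T..int T}). norm (fourier \<mu> (of_int m)))"
  proof (rule sum.reindex[symmetric, unfolded comp_def])
    show "inj_on g ({..<N} \<times> {- int T..int T})"
    proof (rule inj_onI, clarify)
      fix r1 t1 r2 t2 assume r: "r1 < N" "r2 < N" and e: "g (r1, t1) = g (r2, t2)"
      then have e': "int r1 - int r2 = (t2 - t1) * int N" unfolding g_def by (simp add: algebra_simps)
      show "r1 = r2 \<and> t1 = t2"
      proof (cases "t1 = t2")
        case True then show ?thesis using e' by simp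
      next
        case False
        then have "\<bar>t2 - t1\<bar> \<ge> 1" by linarith
        then have "\<bar>t2 - t1\<bar> * int N \<ge> 1 * int N" by (intro mult_right_mono) auto
        then have "\<bar>(t2 - t1) * int N\<bar> \<ge> int N" by (simp add: abs_mult)
        moreover have "\<bar>int r1 - int r2\<bar> < int N" using r by auto
        ultimately show ?thesis using e' by simp
      qed
    qed
  qed
  also have "\<dots> \<le> (\<Sum>m\<in>{m::int. \<bar>real_of_int m\<bar> \<le> real ((T + 1) * N)}. norm (fourier \<mu> (of_int m)))"
  proof (rule sum_mono2)
    have "{m::int. \<bar>real_of_int m\<bar> \<le> real ((T + 1) * N)} = {- \<lfloor>real ((T + 1) * N)\<rfloor>..\<lfloor>real ((T + 1) * N)\<rfloor>}"
      by (rule Sset) simp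
    then show "finite {m::int. \<bar>real_of_int m\<bar> \<le> real ((T + 1) * N)}" by simp
    show "g ` ({..<N} \<times> {- int T..int T}) \<subseteq> {m. \<bar>real_of_int m\<bar> \<le> real ((T + 1) * N)}"
    proof (rule image_subsetI)
      fix x assume x: "x \<in> {..<N} \<times> {- int T..int T}"
      obtain r t where rt: "x = (r, t)" by (cases x)
      from x rt have "r \<in> {..<N}" "t \<in> {- int T..int T}" by auto
      then have r: "int r \<le> int N" and tT: "\<bar>t\<bar> \<le> int T" by auto
      have "\<bar>t\<bar> * int N \<le> int T * int N" using tT by (intro mult_right_mono) auto
      then have "\<bar>int r + t * int N\<bar> \<le> int N + int T * int N"
        using r abs_triangle_ineq[of "int r" "t * int N"] by (simp add: abs_mult)
      then have "real_of_int \<bar>int r + t * int N\<bar> \<le> real_of_int (int N + int T * int N)"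
        by (simp only: of_int_le_iff)
      then show "g x \<in> {m. \<bar>real_of_int m\<bar> \<le> real ((T + 1) * N)}"
        unfolding g_def rt by (simp add: algebra_simps)
    qed
  qed auto
  also have "\<dots> = l1sum \<mu> 0 (real ((T + 1) * N))" unfolding l1sum_def by simp
  finally show ?thesis .
qed

end

context ssm
begin

definition Aout :: "real \<Rightarrow> real set" where "Aout e = UNIV - {x0 - e..x0 + 1 + e}"

lemma Aout_sets[measurable]: "Aout e \<in> sets borel" unfolding Aout_def by simp

lemma pre_sub:
  assumes i: "i \<in> D" and e: "e \<ge> 0"
  shows "mdmap b x0 i -` Aout e \<subseteq> Aout (real b * e)"
proof
  fix x assume x: "x \<in> mdmap b x0 i -` Aout e"
  have bpos: "real b > 0" using b3 by simp
  have ib: "real i \<le> real b - 1" using i Dsub b3 by (auto simp: of_nat_diff)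
  have md: "mdmap b x0 i x = x0 + (x - x0 + real i) / real b"
    unfolding mdmap_def using bpos by (simp add: field_simps)
  show "x \<in> Aout (real b * e)"
  proof (rule ccontr)
    assume "x \<notin> Aout (real b * e)"
    then have x1: "x0 - real b * e \<le> x" "x \<le> x0 + 1 + real b * e" unfolding Aout_def by auto
    have "(x - x0 + real i) / real b \<ge> - e"
      using x1 bpos by (simp add: field_simps)
    moreover have "(x - x0 + real i) / real b \<le> 1 + e"
    proof -
      have "x - x0 + real i \<le> real b * (1 + e)" using x1 ib by (simp add: algebra_simps)
      then show ?thesis using bpos by (simp add: field_simps)
    qed
    ultimately have "mdmap b x0 i x \<in> {x0 - e..x0 + 1 + e}" unfolding md by auto
    then show False using x unfolding Aout_def by auto
  qed
qed

lemma meas_Aout: "e \<ge> 0 \<Longrightarrow> measure \<mu> (Aout e) \<le> measure \<mu> (Aout (real b * e))"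
proof -
  assume e: "e \<ge> 0"
  interpret prob_space \<mu> by (rule prob)
  have "measure \<mu> (Aout e) = (\<Sum>i\<in>D. p i * measure \<mu> (mdmap b x0 i -` Aout e))"
    by (rule ss_meas) simp
  also have "\<dots> \<le> (\<Sum>i\<in>D. p i * measure \<mu> (Aout (real b * e)))"
  proof (rule sum_mono, rule mult_left_mono)
    fix i assume "i \<in> D"
    then show "measure \<mu> (mdmap b x0 i -` Aout e) \<le> measure \<mu> (Aout (real b * e))"
      using pre_sub[OF _ e] by (intro finite_measure_mono) auto
    show "0 \<le> p i" using pnn \<open>i \<in> D\<close> by auto
  qed
  also have "\<dots> = measure \<mu> (Aout (real b * e))" using psum by (simp add: sum_distrib_right[symmetric])
  finally show ?thesis .
qed

lemma meas_Aout_iter: "e \<ge> 0 \<Longrightarrow> measure \<mu> (Aout e) \<le> measure \<mu> (Aout (real b ^ n * e))"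
proof (induction n)
  case 0 then show ?case by simp
next
  case (Suc n)
  have "measure \<mu> (Aout (real b ^ n * e)) \<le> measure \<mu> (Aout (real b * (real b ^ n * e)))"
    by (rule meas_Aout) (use Suc.prems in simp)
  then show ?case using Suc by (simp add: mult.assoc)
qed

lemma Aout_null: "e > 0 \<Longrightarrow> measure \<mu> (Aout e) = 0"
proof -
  assume e: "e > 0"
  interpret prob_space \<mu> by (rule prob)
  define B where "B n = Aout (real b ^ n * e)" for n
  have dec: "decseq B"
  proof (rule decseq_SucI)
    fix n
    have "real b ^ n * e \<le> real b ^ Suc n * e" using e b3 by (simp add: mult_right_mono)
    then show "B (Suc n) \<subseteq> B n" unfolding B_def Aout_def by auto
  qed
  have inter: "(\<Inter>n. B n) = {}"
  proof (rule equals0I)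
    fix x assume x: "x \<in> (\<Inter>n. B n)"
    obtain n where n: "(\<bar>x - x0\<bar> + 1) / e < real b ^ n"
      using real_arch_pow[of "real b" "(\<bar>x - x0\<bar> + 1) / e"] b3 by auto
    then have "\<bar>x - x0\<bar> + 1 < real b ^ n * e" using e by (simp add: field_simps)
    then have "x \<notin> B n" unfolding B_def Aout_def by auto
    with x show False by auto
  qed
  have lim: "(\<lambda>n. measure \<mu> (B n)) \<longlonglongrightarrow> measure \<mu> (\<Inter>n. B n)"
  proof (rule finite_Lim_measure_decseq)
    show "range B \<subseteq> sets \<mu>" unfolding B_def by auto
    show "decseq B" by (rule dec)
  qed
  then have lim0: "(\<lambda>n. measure \<mu> (B n)) \<longlonglongrightarrow> 0" unfolding inter by simp
  have "measure \<mu> (Aout e) \<le> 0"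
    by (rule LIMSEQ_le_const[OF lim0]) (use meas_Aout_iter e in \<open>auto simp: B_def\<close>)
  then show ?thesis using measure_nonneg[of \<mu> "Aout e"] by linarith
qed

lemma support_AE: "AE x in \<mu>. x \<in> {x0..x0+1}"
proof -
  interpret prob_space \<mu> by (rule prob)
  have null: "Aout (1 / (real n + 1)) \<in> null_sets \<mu>" for n
    using Aout_null[of "1 / (real n + 1)"] by (simp add: emeasure_eq_measure null_sets_def)
  have "(\<Union>n. Aout (1 / (real n + 1))) \<in> null_sets \<mu>"
    using null by (intro null_sets_UN) auto
  moreover have "{x \<in> space \<mu>. x \<notin> {x0..x0+1}} \<subseteq> (\<Union>n. Aout (1 / (real n + 1)))"
  proof
    fix x assume "x \<in> {x \<in> space \<mu>. x \<notin> {x0..x0+1}}"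
    then have "x < x0 \<or> x > x0 + 1" by auto
    then obtain d where d: "d > 0" "x < x0 - d \<or> x > x0 + 1 + d"
    proof
      assume "x < x0"
      then have "x < x0 - (x0 - x) / 2" by (simp add: field_simps)
      then show ?thesis using that[of "(x0 - x) / 2"] \<open>x < x0\<close> by auto
    next
      assume "x > x0 + 1"
      then have "x > x0 + 1 + (x - x0 - 1) / 2" by (simp add: field_simps)
      then show ?thesis using that[of "(x - x0 - 1) / 2"] \<open>x > x0 + 1\<close> by auto
    qed
    obtain n where n: "1 / (real n + 1) < d"
    proof -
      obtain n where "inverse (real (Suc n)) < d" using reals_Archimedean d by blast
      then show ?thesis using that[of n] by (simp add: inverse_eq_divide add.commute)
    qed
    then have "x \<in> Aout (1 / (real n + 1))" using d unfolding Aout_def by auto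
    then show "x \<in> (\<Union>n. Aout (1 / (real n + 1)))" by blast
  qed
  ultimately show ?thesis by (rule AE_I')
qed

end

context ssm
begin

lemma int_bdd:
  fixes f :: "real \<Rightarrow> complex"
  assumes "f \<in> borel_measurable borel" "\<And>x. norm (f x) \<le> B"
  shows "integrable \<mu> f"
proof -
  interpret prob_space \<mu> by (rule prob)
  show ?thesis by (rule integrable_const_bound[where B=B]) (use assms in \<open>auto intro: bm_mu\<close>)
qed

lemma tp_cont: "continuous_on UNIV (tp xs)"
proof (induction xs)
  case Nil
  have "tp [] = (\<lambda>x. 0)" by (simp add: fun_eq_iff)
  then show ?case by simp
next
  case (Cons a xs)
  obtain t c where a: "a = (t, c)" by (cases a)
  have "tp (a # xs) = (\<lambda>x. c * cis (2 * pi * of_int t * x) + tp xs x)" by (simp add: fun_eq_iff a)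
  then show ?case using Cons by (simp add: continuous_on_add continuous_on_mult continuous_on_cis continuous_intros)
qed

lemma tp_meas[measurable]: "tp xs \<in> borel_measurable borel"
  by (rule borel_measurable_continuous_onI[OF tp_cont])

lemma tp_bound: "norm (tp xs x) \<le> (\<Sum>(t,c)\<leftarrow>xs. norm c)"
proof (induction xs)
  case Nil then show ?case by simp
next
  case (Cons a xs)
  obtain t c where a: "a = (t, c)" by (cases a)
  have "norm (tp (a # xs) x) \<le> norm (c * cis (2 * pi * of_int t * x)) + norm (tp xs x)"
    unfolding a tp_Cons by (rule norm_triangle_ineq)
  also have "\<dots> \<le> norm c + (\<Sum>(t,c)\<leftarrow>xs. norm c)" using Cons by (simp add: norm_mult)
  finally show ?case by (simp add: a)
qed

lemma cis_int: "integrable \<mu> (\<lambda>x. cis (a * x))"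
  by (rule int_bdd[where B=1]) auto

lemma tp_int:
  assumes z: "\<forall>t::int. fourier \<mu> (\<phi> + of_int t) = 0"
  shows "integrable \<mu> (\<lambda>x. tp xs x * cis (2 * pi * \<phi> * x)) \<and> (\<integral>x. tp xs x * cis (2 * pi * \<phi> * x) \<partial>\<mu>) = 0"
proof (induction xs)
  case Nil then show ?case by simp
next
  case (Cons a xs)
  obtain t c where a: "a = (t, c)" by (cases a)
  have eq: "tp (a # xs) x * cis (2 * pi * \<phi> * x) = c * cis (2 * pi * (\<phi> + of_int t) * x) + tp xs x * cis (2 * pi * \<phi> * x)" for x
  proof -
    have "cis (2 * pi * of_int t * x) * cis (2 * pi * \<phi> * x) = cis (2 * pi * (\<phi> + of_int t) * x)"
      unfolding cis_mult by (simp add: algebra_simps)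
    then show ?thesis unfolding a tp_Cons by (simp add: algebra_simps)
  qed
  have i1: "integrable \<mu> (\<lambda>x. c * cis (2 * pi * (\<phi> + of_int t) * x))"
    using cis_int by (intro integrable_mult_right) simp
  have "(\<integral>x. c * cis (2 * pi * (\<phi> + of_int t) * x) \<partial>\<mu>) = c * fourier \<mu> (\<phi> + of_int t)"
    unfolding fourier_def by simp
  also have "\<dots> = 0" using z by simp
  finally have v1: "(\<integral>x. c * cis (2 * pi * (\<phi> + of_int t) * x) \<partial>\<mu>) = 0" .
  show ?case unfolding eq using Cons i1 v1 by simp
qed

lemma cont_int:
  assumes z: "\<forall>t::int. fourier \<mu> (\<phi> + of_int t) = 0"
    and g: "continuous_on (sphere 0 1) g"
  shows "(\<integral>x. g (cis (2 * pi * x)) * cis (2 * pi * \<phi> * x) \<partial>\<mu>) = 0"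
proof -
  interpret prob_space \<mu> by (rule prob)
  define S where "S = sphere (0::complex) 1"
  have cS: "compact S" unfolding S_def by simp
  have inS: "cis (2 * pi * x) \<in> S" for x unfolding S_def by simp
  obtain B where B: "\<And>z. z \<in> S \<Longrightarrow> norm (g z) \<le> B"
  proof -
    have "compact (g ` S)" using compact_continuous_image[OF g[folded S_def] cS] .
    then have "bounded (g ` S)" by (rule compact_imp_bounded)
    then show ?thesis using that unfolding bounded_iff by blast
  qed
  have gc: "continuous_on UNIV (\<lambda>x. g (cis (2 * pi * x)))"
    by (rule continuous_on_compose2[OF g[folded S_def]]) (auto intro!: continuous_intros simp: inS)
  have gm[measurable]: "(\<lambda>x. g (cis (2 * pi * x))) \<in> borel_measurable borel"
    by (rule borel_measurable_continuous_onI[OF gc])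
  define I where "I = (\<integral>x. g (cis (2 * pi * x)) * cis (2 * pi * \<phi> * x) \<partial>\<mu>)"
  have small: "norm I \<le> 2 * e" if e: "e > 0" for e
  proof -
    have cR: "continuous_on S (\<lambda>z. Re (g z))" using g unfolding S_def by (intro continuous_intros)
    have cI: "continuous_on S (\<lambda>z. Im (g z))" using g unfolding S_def by (intro continuous_intros)
    obtain pR where pR: "real_polynomial_function pR" "\<And>z. z \<in> S \<Longrightarrow> \<bar>Re (g z) - pR z\<bar> < e"
      using Stone_Weierstrass_real_polynomial_function[OF cS cR e] by blast
    obtain pI where pI: "real_polynomial_function pI" "\<And>z. z \<in> S \<Longrightarrow> \<bar>Im (g z) - pI z\<bar> < e"
      using Stone_Weierstrass_real_polynomial_function[OF cS cI e] by blast
    obtain xsR where xsR: "\<And>x. complex_of_real (pR (cis (2 * pi * x))) = tp xsR x"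
      using rpf_tp[OF pR(1)] by blast
    obtain xsI where xsI: "\<And>x. complex_of_real (pI (cis (2 * pi * x))) = tp xsI x"
      using rpf_tp[OF pI(1)] by blast
    define Q where "Q x = tp xsR x + \<i> * tp xsI x" for x
    have tR: "integrable \<mu> (\<lambda>x. tp xsR x * cis (2 * pi * \<phi> * x))" "(\<integral>x. tp xsR x * cis (2 * pi * \<phi> * x) \<partial>\<mu>) = 0"
      using tp_int[OF z] by auto
    have tI: "integrable \<mu> (\<lambda>x. tp xsI x * cis (2 * pi * \<phi> * x))" "(\<integral>x. tp xsI x * cis (2 * pi * \<phi> * x) \<partial>\<mu>) = 0"
      using tp_int[OF z] by auto
    have Qeq: "Q x * cis (2 * pi * \<phi> * x) = tp xsR x * cis (2 * pi * \<phi> * x) + \<i> * (tp xsI x * cis (2 * pi * \<phi> * x))" for x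
      unfolding Q_def by (simp add: algebra_simps)
    have Qi: "integrable \<mu> (\<lambda>x. Q x * cis (2 * pi * \<phi> * x))"
      unfolding Qeq using tR tI by auto
    have Q0: "(\<integral>x. Q x * cis (2 * pi * \<phi> * x) \<partial>\<mu>) = 0"
      unfolding Qeq using tR tI by simp
    have Gi: "integrable \<mu> (\<lambda>x. g (cis (2 * pi * x)) * cis (2 * pi * \<phi> * x))"
      by (rule int_bdd[where B=B]) (auto simp: norm_mult B inS)
    have pw: "norm (g (cis (2 * pi * x)) - Q x) \<le> 2 * e" for x
    proof -
      have "g (cis (2 * pi * x)) - Q x = complex_of_real (Re (g (cis (2 * pi * x))) - pR (cis (2 * pi * x))) + \<i> * complex_of_real (Im (g (cis (2 * pi * x))) - pI (cis (2 * pi * x)))"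
        unfolding Q_def xsR[symmetric] xsI[symmetric] by (simp add: complex_eq_iff)
      also have "norm \<dots> \<le> \<bar>Re (g (cis (2 * pi * x))) - pR (cis (2 * pi * x))\<bar> + \<bar>Im (g (cis (2 * pi * x))) - pI (cis (2 * pi * x))\<bar>"
        by (rule order_trans[OF norm_triangle_ineq]) (simp add: norm_mult del: of_real_diff)
      also have "\<dots> \<le> 2 * e" using pR(2)[OF inS[of x]] pI(2)[OF inS[of x]] by simp
      finally show ?thesis .
    qed
    have "I = (\<integral>x. g (cis (2 * pi * x)) * cis (2 * pi * \<phi> * x) \<partial>\<mu>) - (\<integral>x. Q x * cis (2 * pi * \<phi> * x) \<partial>\<mu>)"
      unfolding I_def Q0 by simp
    also have "\<dots> = (\<integral>x. (g (cis (2 * pi * x)) - Q x) * cis (2 * pi * \<phi> * x) \<partial>\<mu>)"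
      using Gi Qi by (simp add: algebra_simps)
    finally have "norm I = norm (\<integral>x. (g (cis (2 * pi * x)) - Q x) * cis (2 * pi * \<phi> * x) \<partial>\<mu>)" by simp
    also have "\<dots> \<le> (\<integral>x. norm ((g (cis (2 * pi * x)) - Q x) * cis (2 * pi * \<phi> * x)) \<partial>\<mu>)"
      by (rule integral_norm_bound)
    also have "\<dots> \<le> (\<integral>x. 2 * e \<partial>\<mu>)"
    proof (rule integral_mono)
      show "integrable \<mu> (\<lambda>x. 2 * e)" by simp
      show "integrable \<mu> (\<lambda>x. norm ((g (cis (2 * pi * x)) - Q x) * cis (2 * pi * \<phi> * x)))"
        using Gi Qi by (intro integrable_norm) (simp add: algebra_simps)
      show "norm ((g (cis (2 * pi * x)) - Q x) * cis (2 * pi * \<phi> * x)) \<le> 2 * e" for x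
        using pw[of x] by (simp add: norm_mult)
    qed
    also have "\<dots> = 2 * e" using prob_space by simp
    finally show ?thesis .
  qed
  have "norm I = 0"
  proof (rule ccontr)
    assume "norm I \<noteq> 0"
    then have "norm I > 0" by simp
    then have "norm I \<le> 2 * (norm I / 4)" using small[of "norm I / 4"] by simp
    then show False using \<open>norm I > 0\<close> by simp
  qed
  then show ?thesis unfolding I_def by simp
qed

end

definition gfun :: "real \<Rightarrow> real \<Rightarrow> complex \<Rightarrow> complex" where
  "gfun x0 \<phi> z = complex_of_real (norm (z * cis (- 2 * pi * x0) - 1)) *
      cis (- \<phi> * (Arg (- (z * cis (- 2 * pi * x0))) + pi) - 2 * pi * \<phi> * x0)"

lemma isCont_cis': "isCont cis t"
  using continuous_on_cis[OF continuous_on_id] continuous_on_eq_continuous_at open_UNIV by blast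

lemma gfun_cont: "continuous_on (sphere 0 1) (gfun x0 \<phi>)"
proof (rule continuous_on_eq_continuous_within[THEN iffD2], rule ballI)
  fix z :: complex assume z: "z \<in> sphere 0 1"
  define w where "w y = y * cis (- 2 * pi * x0)" for y
  have wc: "continuous_on UNIV w" unfolding w_def by (intro continuous_intros)
  show "continuous (at z within sphere 0 1) (gfun x0 \<phi>)"
  proof (cases "w z = 1")
    case False
    have nw: "norm (w z) = 1" using z unfolding w_def by (simp add: norm_mult)
    have "- w z \<notin> \<real>\<^sub>\<le>\<^sub>0"
    proof
      assume "- w z \<in> \<real>\<^sub>\<le>\<^sub>0"
      then obtain r where r: "- w z = complex_of_real r" "r \<le> 0" by (auto simp: nonpos_Reals_def)
      then have "w z = complex_of_real (- r)" by (metis minus_minus of_real_minus)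
      moreover have "\<bar>r\<bar> = 1" using nw r by (metis norm_minus_cancel norm_of_real)
      ultimately have "w z = 1" using r by simp
      with False show False by simp
    qed
    then have "continuous (at (- w z)) Arg" by (rule continuous_at_Arg)
    then have "continuous (at z) (\<lambda>y. Arg (- w y))"
      unfolding w_def by (intro continuous_at_compose[where f="\<lambda>y. - (y * cis (- 2 * pi * x0))" and g=Arg, unfolded comp_def]) (auto intro!: continuous_intros)
    then have "isCont (\<lambda>y. - \<phi> * (Arg (- w y) + pi) - 2 * pi * \<phi> * x0) z"
      by (intro continuous_intros)
    then have "isCont (\<lambda>y. cis (- \<phi> * (Arg (- w y) + pi) - 2 * pi * \<phi> * x0)) z"
      by (rule continuous_at_compose[OF _ isCont_cis', unfolded comp_def])
    then have "continuous (at z) (gfun x0 \<phi>)"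
      unfolding gfun_def w_def[symmetric] by (intro continuous_intros) (auto simp: w_def intro!: continuous_intros)
    then show ?thesis by (rule continuous_at_imp_continuous_at_within)
  next
    case True
    have g0: "gfun x0 \<phi> z = 0" unfolding gfun_def w_def[symmetric] using True by simp
    have "((\<lambda>y. norm (w y - 1)) \<longlongrightarrow> norm (w z - 1)) (at z within sphere 0 1)"
      unfolding w_def by (intro tendsto_intros)
    then have lim0: "((\<lambda>y. norm (w y - 1)) \<longlongrightarrow> 0) (at z within sphere 0 1)" using True by simp
    have "(gfun x0 \<phi> \<longlongrightarrow> 0) (at z within sphere 0 1)"
    proof (rule Lim_null_comparison[OF _ lim0])
      show "\<forall>\<^sub>F y in at z within sphere 0 1. norm (gfun x0 \<phi> y) \<le> norm (w y - 1)"
        by (intro always_eventually allI) (simp add: gfun_def w_def norm_mult)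
    qed
    then show ?thesis unfolding continuous_within g0 .
  qed
qed

lemma gfun_val:
  assumes x: "x0 \<le> x" "x \<le> x0 + 1"
  shows "gfun x0 \<phi> (cis (2 * pi * x)) * cis (2 * pi * \<phi> * x) = complex_of_real (norm (cis (2 * pi * (x - x0)) - 1))"
proof -
  define u where "u = x - x0"
  have u: "0 \<le> u" "u \<le> 1" using x unfolding u_def by auto
  have w: "cis (2 * pi * x) * cis (- 2 * pi * x0) = cis (2 * pi * u)"
    unfolding cis_mult u_def by (simp add: algebra_simps)
  show ?thesis
  proof (cases "cis (2 * pi * u) = 1")
    case True
    then show ?thesis unfolding gfun_def w u_def[symmetric] by simp
  next
    case False
    then have "u \<noteq> 0" "u \<noteq> 1" by auto
    then have u': "0 < u" "u < 1" using u by auto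
    have "- cis (2 * pi * u) = cis (2 * pi * u - pi)"
    proof -
      have "- cis (2 * pi * u) = cis (2 * pi * u + pi)" by (rule minus_cis)
      also have "\<dots> = cis (2 * pi * u - pi) * cis (2 * pi)" unfolding cis_mult by (simp add: algebra_simps)
      also have "\<dots> = cis (2 * pi * u - pi)" by simp
      finally show ?thesis .
    qed
    moreover have "Arg (cis (2 * pi * u - pi)) = 2 * pi * u - pi"
      by (rule Arg_cis) (use u' in auto)
    ultimately have A: "Arg (- cis (2 * pi * u)) + pi = 2 * pi * u" by simp
    have "cis (- \<phi> * (2 * pi * u) - 2 * pi * \<phi> * x0) * cis (2 * pi * \<phi> * x) = 1"
      unfolding cis_mult u_def by (simp add: algebra_simps)
    then show ?thesis unfolding gfun_def w A u_def[symmetric] by (simp add: mult.assoc)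
  qed
qed


context ssm
begin

lemma gfun_meas[measurable]: "(\<lambda>x. gfun x0 \<phi> (cis (2 * pi * x)) * cis (2 * pi * \<phi> * x)) \<in> borel_measurable borel"
proof -
  have "continuous_on UNIV (\<lambda>x. gfun x0 \<phi> (cis (2 * pi * x)))"
    by (rule continuous_on_compose2[OF gfun_cont]) (auto intro!: continuous_intros)
  then have "continuous_on UNIV (\<lambda>x. gfun x0 \<phi> (cis (2 * pi * x)) * cis (2 * pi * \<phi> * x))"
    by (intro continuous_intros)
  then show ?thesis by (rule borel_measurable_continuous_onI)
qed

lemma conc:
  assumes z: "\<forall>t::int. fourier \<mu> (\<phi> + of_int t) = 0"
  shows "AE x in \<mu>. x = x0 \<or> x = x0 + 1"
proof -
  interpret prob_space \<mu> by (rule prob)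
  define h where "h x = norm (cis (2 * pi * (x - x0)) - 1)" for x
  have hm[measurable]: "h \<in> borel_measurable borel" unfolding h_def by measurable
  have I0: "(\<integral>x. gfun x0 \<phi> (cis (2 * pi * x)) * cis (2 * pi * \<phi> * x) \<partial>\<mu>) = 0"
    by (rule cont_int[OF z gfun_cont])
  have "AE x in \<mu>. gfun x0 \<phi> (cis (2 * pi * x)) * cis (2 * pi * \<phi> * x) = complex_of_real (h x)"
    using support_AE by eventually_elim (simp add: gfun_val h_def)
  then have "(\<integral>x. gfun x0 \<phi> (cis (2 * pi * x)) * cis (2 * pi * \<phi> * x) \<partial>\<mu>) = (\<integral>x. complex_of_real (h x) \<partial>\<mu>)"
    by (intro integral_cong_AE) (auto intro: bm_mu)
  then have "(\<integral>x. h x \<partial>\<mu>) = 0" using I0 by simp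
  moreover have "integrable \<mu> h"
  proof (rule integrable_const_bound[where B=2])
    have "norm (cis a - 1) \<le> 2" for a
      using norm_triangle_ineq4[of "cis a" 1] by simp
    then show "AE x in \<mu>. norm (h x) \<le> 2" unfolding h_def by simp
  qed (auto intro: bm_mu)
  ultimately have "AE x in \<mu>. h x = 0"
    by (subst (asm) integral_nonneg_eq_0_iff_AE) (auto simp: h_def)
  then show ?thesis using support_AE
  proof eventually_elim
    case (elim x)
    then have "cis (2 * pi * (x - x0)) = 1" unfolding h_def by simp
    then obtain n :: int where n: "2 * pi * (x - x0) = of_int n * 2 * pi" using cis_eq_1_int by blast
    then have xn: "x - x0 = of_int n" by simp
    then have "0 \<le> real_of_int n" "real_of_int n \<le> 1" using elim by auto
    then have "n = 0 \<or> n = 1" by linarith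
    then show ?case using xn by auto
  qed
qed

lemma pre_single: "mdmap b x0 i -` {a} = {real b * (a - x0) + x0 - real i}"
proof -
  have bpos: "real b > 0" using b3 by simp
  show ?thesis unfolding mdmap_def using bpos by (auto simp: field_simps)
qed

lemma small_single: "y < x0 - 1/2 \<or> y > x0 + 1 + 1/2 \<Longrightarrow> measure \<mu> {y} = 0"
proof -
  assume y: "y < x0 - 1/2 \<or> y > x0 + 1 + 1/2"
  interpret prob_space \<mu> by (rule prob)
  have "measure \<mu> {y} \<le> measure \<mu> (Aout (1/2))"
    by (rule finite_measure_mono) (use y in \<open>auto simp: Aout_def\<close>)
  then show ?thesis using Aout_null[of "1/2"] measure_nonneg[of \<mu> "{y}"] by simp
qed

lemma atom0: "measure \<mu> {x0} = qd 0 * measure \<mu> {x0}"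
proof -
  have "measure \<mu> {x0} = (\<Sum>i\<in>D. p i * measure \<mu> {x0 - real i})"
    using ss_meas[of "{x0}"] by (simp add: pre_single)
  also have "\<dots> = (\<Sum>i\<in>D. if i = 0 then p 0 * measure \<mu> {x0} else 0)"
  proof (rule sum.cong[OF refl])
    fix i assume "i \<in> D"
    show "p i * measure \<mu> {x0 - real i} = (if i = 0 then p 0 * measure \<mu> {x0} else 0)"
    proof (cases "i = 0")
      case False
      then have "x0 - real i < x0 - 1/2" by simp
      then show ?thesis using False small_single by simp
    qed simp
  qed
  also have "\<dots> = qd 0 * measure \<mu> {x0}" using finD by (simp add: qd_def)
  finally show ?thesis .
qed

lemma atom1: "measure \<mu> {x0 + 1} = qd (b - 1) * measure \<mu> {x0 + 1}"
proof -
  have bpos: "real b > 0" using b3 by simp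
  have "measure \<mu> {x0 + 1} = (\<Sum>i\<in>D. p i * measure \<mu> {real b + x0 - real i})"
    using ss_meas[of "{x0 + 1}"] by (simp add: pre_single)
  also have "\<dots> = (\<Sum>i\<in>D. if i = b - 1 then p (b - 1) * measure \<mu> {x0 + 1} else 0)"
  proof (rule sum.cong[OF refl])
    fix i assume i: "i \<in> D"
    then have ib: "i \<le> b - 1" using Dsub by auto
    show "p i * measure \<mu> {real b + x0 - real i} = (if i = b - 1 then p (b - 1) * measure \<mu> {x0 + 1} else 0)"
    proof (cases "i = b - 1")
      case True
      then have "real b + x0 - real i = x0 + 1" using b3 by (simp add: of_nat_diff)
      then show ?thesis using True by simp
    next
      case False
      then have "i + 2 \<le> b" using ib b3 by linarith
      then have "real i + 2 \<le> real b" by linarith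
      then have "real b + x0 - real i > x0 + 1 + 1/2" by simp
      then show ?thesis using False small_single by simp
    qed
  qed
  also have "\<dots> = qd (b - 1) * measure \<mu> {x0 + 1}" using finD by (simp add: qd_def)
  finally show ?thesis .
qed

lemma qd_nonneg: "qd i \<ge> 0" using pnn by (simp add: qd_def)

lemma qd_sum: "qd 0 + qd (b - 1) \<le> 1"
proof -
  have Db: "D \<subseteq> {..<b}" using Dsub b3 by auto
  have "(\<Sum>i<b. qd i) = (\<Sum>i\<in>D. qd i)"
    by (rule sum.mono_neutral_right) (use Db in \<open>auto simp: qd_def\<close>)
  also have "\<dots> = 1" using psum by (simp add: qd_def)
  finally have s1: "(\<Sum>i<b. qd i) = 1" .
  have "(\<Sum>i\<in>{0, b - 1}. qd i) \<le> (\<Sum>i<b. qd i)"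
    by (rule sum_mono2) (use b3 qd_nonneg in auto)
  moreover have "(\<Sum>i\<in>{0, b - 1}. qd i) = qd 0 + qd (b - 1)" using b3 by simp
  ultimately show ?thesis using s1 by simp
qed

lemma nonvanish: "\<exists>t::int. fourier \<mu> (\<phi> + of_int t) \<noteq> 0"
proof (rule ccontr)
  assume "\<not> (\<exists>t::int. fourier \<mu> (\<phi> + of_int t) \<noteq> 0)"
  then have z: "\<forall>t::int. fourier \<mu> (\<phi> + of_int t) = 0" by simp
  interpret prob_space \<mu> by (rule prob)
  have C: "AE x in \<mu>. x = x0 \<or> x = x0 + 1" by (rule conc[OF z])
  have ab: "measure \<mu> {x0} = 0 \<or> measure \<mu> {x0 + 1} = 0"
  proof (rule ccontr)
    assume "\<not> ?thesis"
    then have "qd 0 = 1" "qd (b - 1) = 1" using atom0 atom1 by auto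
    then show False using qd_sum by simp
  qed
  obtain a where a: "AE x in \<mu>. x = a"
  proof (cases "measure \<mu> {x0 + 1} = 0")
    case True
    then have "{x0 + 1} \<in> null_sets \<mu>" by (simp add: emeasure_eq_measure null_sets_def)
    then have "AE x in \<mu>. x \<notin> {x0 + 1}" by (rule AE_not_in)
    with C have "AE x in \<mu>. x = x0" by eventually_elim auto
    then show ?thesis by (rule that)
  next
    case False
    then have "measure \<mu> {x0} = 0" using ab by simp
    then have "{x0} \<in> null_sets \<mu>" by (simp add: emeasure_eq_measure null_sets_def)
    then have "AE x in \<mu>. x \<notin> {x0}" by (rule AE_not_in)
    with C have "AE x in \<mu>. x = x0 + 1" by eventually_elim auto
    then show ?thesis by (rule that)
  qed
  have "fourier \<mu> \<phi> = (\<integral>x. cis (2 * pi * \<phi> * a) \<partial>\<mu>)"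
    unfolding fourier_def using a by (intro integral_cong_AE) (auto intro: bm_mu)
  also have "\<dots> = cis (2 * pi * \<phi> * a)" using prob_space by simp
  finally have "fourier \<mu> \<phi> \<noteq> 0" by simp
  moreover have "fourier \<mu> (\<phi> + of_int 0) = 0" using z by blast
  ultimately show False by simp
qed

end

lemma lnpow:
  assumes e: "(e::real) > 0"
  shows "((\<lambda>X. X powr (- e) * (1 + ln X)) \<longlongrightarrow> 0) at_top"
proof -
  have p0: "((\<lambda>X::real. X powr (- e)) \<longlongrightarrow> 0) at_top"
    by (rule tendsto_neg_powr) (use e in \<open>auto intro: filterlim_ident\<close>)
  have "filterlim (\<lambda>X::real. inverse (X powr (- e))) at_top at_top"
  proof (rule filterlim_inverse_at_top[OF p0])
    show "\<forall>\<^sub>F X in at_top. 0 < (X::real) powr (- e)"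
      using eventually_gt_at_top[of 0] by eventually_elim simp
  qed
  moreover have "eventually (\<lambda>X::real. inverse (X powr (- e)) = X powr e) at_top"
    using eventually_gt_at_top[of 0] by eventually_elim (simp add: powr_minus)
  ultimately have pe: "filterlim (\<lambda>X::real. X powr e) at_top at_top"
    using filterlim_cong by fastforce
  have l1: "((\<lambda>X. ln (X powr e) / X powr e) \<longlongrightarrow> 0) at_top"
    by (rule filterlim_compose[OF ln_x_over_x_tendsto_0 pe])
  have l2: "((\<lambda>X. (1 / e) * (ln (X powr e) / X powr e) + X powr (- e)) \<longlongrightarrow> 0) at_top"
    using tendsto_add[OF tendsto_mult[OF tendsto_const[of "1 / e"] l1] p0] by (simp only: mult_zero_right add_0_right)
  have ev: "eventually (\<lambda>X. (1 / e) * (ln (X powr e) / X powr e) + X powr (- e) = X powr (- e) * (1 + ln X)) at_top"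
    using eventually_gt_at_top[of 0]
  proof eventually_elim
    case (elim X)
    then show ?case using e by (simp add: ln_powr powr_minus field_simps)
  qed
  show ?thesis by (rule Lim_transform_eventually[OF l2 ev])
qed

context ssm
begin

lemma F_cont_on: "continuous_on UNIV (fourier \<mu>)"
  by (simp add: continuous_at_imp_continuous_on F_cont)

lemma unif: "\<exists>T c. c > 0 \<and> (\<forall>\<phi>. 0 \<le> \<phi> \<longrightarrow> \<phi> \<le> 1 \<longrightarrow> c \<le> (\<Sum>t\<in>{- int T..int T}. norm (fourier \<mu> (\<phi> + of_int t))))"
proof -
  define G where "G T \<phi> = (\<Sum>t\<in>{- int T..int T}. norm (fourier \<mu> (\<phi> + of_int t)))" for T :: nat and \<phi>
  have Gc: "continuous_on UNIV (G T)" for T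
    unfolding G_def
    by (intro continuous_on_sum continuous_on_norm continuous_on_compose2[OF F_cont_on]) (auto intro!: continuous_intros)
  have mono: "G T \<phi> \<le> G T' \<phi>" if "T \<le> T'" for T T' \<phi>
    unfolding G_def by (rule sum_mono2) (use that in auto)
  have cover: "{0..1} \<subseteq> (\<Union>T\<in>UNIV. {\<phi>. 0 < G T \<phi>})"
  proof
    fix \<phi> :: real assume "\<phi> \<in> {0..1}"
    obtain t :: int where t: "fourier \<mu> (\<phi> + of_int t) \<noteq> 0" using nonvanish by blast
    have "t \<in> {- int (nat \<bar>t\<bar>)..int (nat \<bar>t\<bar>)}" by auto
    then have "norm (fourier \<mu> (\<phi> + of_int t)) \<le> G (nat \<bar>t\<bar>) \<phi>"
      unfolding G_def by (intro member_le_sum) auto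
    then have "0 < G (nat \<bar>t\<bar>) \<phi>" using t by (meson norm_le_zero_iff not_le order.trans)
    then show "\<phi> \<in> (\<Union>T\<in>UNIV. {\<phi>. 0 < G T \<phi>})" by blast
  qed
  obtain C' where C': "C' \<subseteq> UNIV" "finite C'" "{0..1} \<subseteq> (\<Union>T\<in>C'. {\<phi>. 0 < G T \<phi>})"
    by (rule compactE_image[OF compact_Icc _ cover]) (auto intro: open_Collect_less Gc continuous_on_const)
  have "C' \<noteq> {}" using C'(3) by auto
  define T0 where "T0 = Max C'"
  have pos: "0 < G T0 \<phi>" if phi: "\<phi> \<in> {0..1}" for \<phi>
  proof -
    obtain T where T: "T \<in> C'" "0 < G T \<phi>" using C'(3) phi by blast
    have "T \<le> T0" unfolding T0_def using T C'(2) by simp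
    then show ?thesis using mono[of T T0 \<phi>] T by simp
  qed
  obtain \<phi>0 where \<phi>0: "\<phi>0 \<in> {0..1}" "\<forall>\<phi>\<in>{0..1}. G T0 \<phi>0 \<le> G T0 \<phi>"
    using continuous_attains_inf[OF compact_Icc _ continuous_on_subset[OF Gc[of T0]], of 0 1] by auto
  show ?thesis
    by (rule exI[where x=T0], rule exI[where x="G T0 \<phi>0"]) (use pos \<phi>0 in \<open>auto simp: G_def\<close>)
qed

end

context ssm
begin

lemma L_fin: "finite {m::int. \<bar>real_of_int m\<bar> \<le> X}"
proof (cases "X \<ge> 0")
  case True then show ?thesis using Sset[OF True] by simp
next
  case False
  then have "{m::int. \<bar>real_of_int m\<bar> \<le> X} = {}" by auto
  then show ?thesis by simp
qed

lemma L_nonneg: "l1sum \<mu> \<theta> X \<ge> 0"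
  unfolding l1sum_def by (rule sum_nonneg) simp

lemma L_mono: "X \<le> Y \<Longrightarrow> l1sum \<mu> \<theta> X \<le> l1sum \<mu> \<theta> Y"
  unfolding l1sum_def by (rule sum_mono2[OF L_fin]) auto

lemma L_triv: "X \<ge> 0 \<Longrightarrow> l1sum \<mu> \<theta> X \<le> 2 * X + 1"
proof -
  assume X: "X \<ge> 0"
  have "l1sum \<mu> \<theta> X \<le> (\<Sum>m\<in>{m::int. \<bar>real_of_int m\<bar> \<le> X}. 1)"
    unfolding l1sum_def by (rule sum_mono) (rule normF_le1)
  also have "\<dots> = real (card {- \<lfloor>X\<rfloor>..\<lfloor>X\<rfloor>})" using Sset[OF X] by simp
  also have "\<dots> = 2 * of_int \<lfloor>X\<rfloor> + 1" using X by simp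
  also have "\<dots> \<le> 2 * X + 1" by linarith
  finally show ?thesis .
qed

lemma L0_ge1: "X \<ge> 0 \<Longrightarrow> 1 \<le> l1sum \<mu> 0 X"
proof -
  assume X: "X \<ge> 0"
  have "norm (fourier \<mu> (real_of_int 0 + 0)) \<le> l1sum \<mu> 0 X"
    unfolding l1sum_def by (rule member_le_sum) (use X L_fin in auto)
  then show ?thesis using F0 by simp
qed

lemma MI: "\<exists>C K. C > 0 \<and> K > 0 \<and> (\<forall>X \<ge> 1. \<forall>\<theta>. l1sum \<mu> \<theta> X \<le> C * (1 + ln X) * l1sum \<mu> 0 (K * X))"
proof -
  obtain T c where c: "c > 0" and cT: "\<And>\<phi>. 0 \<le> \<phi> \<Longrightarrow> \<phi> \<le> 1 \<Longrightarrow> c \<le> (\<Sum>t\<in>{- int T..int T}. norm (fourier \<mu> (\<phi> + of_int t)))"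
    using unif by blast
  have bpos: "real b \<ge> 3" using b3 by simp
  define C where "C = 4 * (1 + ln (3 * real b)) / c"
  define K where "K = 3 * real b * (real T + 1)"
  have lnb: "ln (3 * real b) \<ge> 0" using bpos by simp
  have Cpos: "C > 0" unfolding C_def using c lnb by simp
  have Kpos: "K > 0" unfolding K_def using bpos by simp
  have main: "l1sum \<mu> \<theta> X \<le> C * (1 + ln X) * l1sum \<mu> 0 (K * X)" if X: "X \<ge> 1" for X \<theta>
  proof -
    define P where "P k = (2 * X + 1 \<le> real b ^ k)" for k
    have exP: "\<exists>k. P k"
    proof -
      obtain k where "2 * X + 1 < real b ^ k" using real_arch_pow[of "real b" "2 * X + 1"] bpos by auto
      then show ?thesis unfolding P_def by (auto intro: less_imp_le)
    qed
    define k where "k = (LEAST k. P k)"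
    have Pk: "P k" unfolding k_def by (rule LeastI_ex[OF exP])
    have k0: "k \<noteq> 0"
    proof
      assume "k = 0"
      then show False using Pk X unfolding P_def by simp
    qed
    then have k1: "k \<ge> 1" by simp
    have "\<not> P (k - 1)" unfolding k_def by (rule not_less_Least) (use k0 k_def in simp)
    then have lt: "real b ^ (k - 1) < 2 * X + 1" unfolding P_def by simp
    define N where "N = b ^ k"
    have Nreal: "real N = real b ^ k" unfolding N_def by simp
    have Nup: "real N \<le> real b * (2 * X + 1)"
    proof -
      have "real b ^ k = real b * real b ^ (k - 1)" using k0 by (metis power_eq_if)
      then show ?thesis using lt bpos Nreal by (simp add: mult_left_mono)
    qed
    have NX: "real N \<le> 3 * real b * X"
    proof -
      have "2 * X + 1 \<le> 3 * X" using X by simp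
      then have "real b * (2 * X + 1) \<le> real b * (3 * X)" using bpos by (intro mult_left_mono) auto
      then show ?thesis using Nup by simp
    qed
    have N1: "real N \<ge> 1" using Pk X unfolding P_def Nreal by simp
    obtain w where w: "\<And>\<xi>. norm (fourier \<mu> \<xi>) = norm (Wf w N \<xi>) * norm (fourier \<mu> (\<xi> / real N))"
      using iter[of k] unfolding Wf_def N_def by blast
    have Kfl: "2 * nat \<lfloor>X\<rfloor> + 1 \<le> N"
    proof -
      have "real (2 * nat \<lfloor>X\<rfloor> + 1) = 2 * of_int \<lfloor>X\<rfloor> + 1" using X by simp
      also have "\<dots> \<le> 2 * X + 1" by linarith
      also have "\<dots> \<le> real N" using Pk unfolding P_def Nreal .
      finally show ?thesis by linarith
    qed
    define S where "S = (\<Sum>r<N. norm (Wf w N (real r)))"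
    have S0: "S \<ge> 0" unfolding S_def by (rule sum_nonneg) simp
    have up: "l1sum \<mu> \<theta> X \<le> 4 * harm N * S"
      unfolding S_def by (rule upper[OF N_def k1 Kfl _ w]) (use X in linarith)
    have lo: "c * S \<le> l1sum \<mu> 0 (real ((T + 1) * N))"
      unfolding S_def by (rule lower[OF N_def w cT])
    have hN: "harm N \<le> (1 + ln (3 * real b)) * (1 + ln X)"
    proof -
      have "harm N \<le> 1 + ln (real N)" by (rule harm_le_ln) (use N1 in simp)
      also have "ln (real N) \<le> ln (3 * real b * X)" using NX N1 by (intro ln_mono) auto
      also have "ln (3 * real b * X) = ln (3 * real b) + ln X" using bpos X by (simp add: ln_mult)
      finally have "harm N \<le> 1 + ln (3 * real b) + ln X" by simp
      also have "\<dots> \<le> (1 + ln (3 * real b)) * (1 + ln X)"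
        using lnb X by (simp add: algebra_simps)
      finally show ?thesis .
    qed
    have hpos: "harm N \<ge> (0::real)" by (rule harm_nonneg)
    have Lmono: "l1sum \<mu> 0 (real ((T + 1) * N)) \<le> l1sum \<mu> 0 (K * X)"
    proof (rule L_mono)
      have "real ((T + 1) * N) = (real T + 1) * real N" by (simp add: algebra_simps)
      also have "\<dots> \<le> (real T + 1) * (3 * real b * X)" using NX by (intro mult_left_mono) auto
      also have "\<dots> = K * X" unfolding K_def by simp
      finally show "real ((T + 1) * N) \<le> K * X" .
    qed
    have "l1sum \<mu> \<theta> X \<le> 4 * harm N * S" by (rule up)
    also have "\<dots> = 4 * harm N * (c * S) / c" using c by simp
    also have "\<dots> \<le> 4 * harm N * l1sum \<mu> 0 (K * X) / c"
      using lo Lmono hpos c by (intro divide_right_mono mult_left_mono) auto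
    also have "\<dots> \<le> 4 * ((1 + ln (3 * real b)) * (1 + ln X)) * l1sum \<mu> 0 (K * X) / c"
      using hN c L_nonneg[of 0 "K * X"] by (intro divide_right_mono mult_right_mono) auto
    also have "\<dots> = C * (1 + ln X) * l1sum \<mu> 0 (K * X)" unfolding C_def by simp
    finally show ?thesis .
  qed
  show ?thesis using Cpos Kpos main by blast
qed

end

lemma triv_lim: "((\<lambda>X::real. X powr (- 2) * (2 * X + 1)) \<longlongrightarrow> 0) at_top"
proof -
  have p1: "((\<lambda>X::real. X powr (- 1)) \<longlongrightarrow> 0) at_top"
    by (rule tendsto_neg_powr) (auto intro: filterlim_ident)
  have p2: "((\<lambda>X::real. X powr (- 2)) \<longlongrightarrow> 0) at_top"
    by (rule tendsto_neg_powr) (auto intro: filterlim_ident)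
  have l: "((\<lambda>X::real. 2 * X powr (- 1) + X powr (- 2)) \<longlongrightarrow> 0) at_top"
    using tendsto_add[OF tendsto_mult[OF tendsto_const[of 2] p1] p2] by (simp only: mult_zero_right add_0_right)
  have ev: "eventually (\<lambda>X::real. 2 * X powr (- 1) + X powr (- 2) = X powr (- 2) * (2 * X + 1)) at_top"
    using eventually_gt_at_top[of 0]
  proof eventually_elim
    case (elim X)
    have "X powr (- 2) * X = X powr (- 2) * X powr 1" using elim by simp
    also have "\<dots> = X powr (- 2 + 1)" by (rule powr_add[symmetric])
    finally have "X powr (- 2) * X = X powr (- 1)" by simp
    then show ?case by (simp add: algebra_simps)
  qed
  show ?thesis by (rule Lim_transform_eventually[OF l ev])
qed

context ssm
begin

definition S0 where "S0 = {s::real. ((\<lambda>X. X powr (- s) * l1sum \<mu> 0 X) \<longlongrightarrow> 0) at_top}"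
definition S1 where "S1 = {s::real. ((\<lambda>X. X powr (- s) * (SUP \<theta>\<in>{0..1}. l1sum \<mu> \<theta> X)) \<longlongrightarrow> 0) at_top}"

lemma bdd_L: "X \<ge> 0 \<Longrightarrow> bdd_above ((\<lambda>\<theta>. l1sum \<mu> \<theta> X) ` {0..1})"
  by (rule bdd_aboveI[where M="2 * X + 1"]) (auto intro: L_triv)

lemma S0_pos: "s \<in> S0 \<Longrightarrow> s > 0"
proof (rule ccontr)
  assume s: "s \<in> S0" and "\<not> s > 0"
  then have s0: "- s \<ge> 0" by simp
  have lim: "((\<lambda>X. X powr (- s) * l1sum \<mu> 0 X) \<longlongrightarrow> 0) at_top" using s unfolding S0_def by simp
  have "eventually (\<lambda>X. X powr (- s) * l1sum \<mu> 0 X < 1) at_top"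
    using order_tendstoD(2)[OF lim, of 1] by simp
  moreover have "eventually (\<lambda>X. X powr (- s) * l1sum \<mu> 0 X \<ge> 1) at_top"
    using eventually_ge_at_top[of 1]
  proof eventually_elim
    case (elim X)
    have "1 \<le> X powr (- s)" using elim s0 by (rule ge_one_powr_ge_zero)
    moreover have "1 \<le> l1sum \<mu> 0 X" using elim by (intro L0_ge1) simp
    ultimately have "1 * 1 \<le> X powr (- s) * l1sum \<mu> 0 X" by (intro mult_mono) auto
    then show ?case by simp
  qed
  ultimately have "eventually (\<lambda>X::real. False) at_top" by eventually_elim simp
  then show False by simp
qed

lemma two_S0: "2 \<in> S0"
proof -
  have "((\<lambda>X. X powr (- 2) * l1sum \<mu> 0 X) \<longlongrightarrow> 0) at_top"
  proof (rule tendsto_sandwich[OF _ _ tendsto_const triv_lim])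
    show "\<forall>\<^sub>F X in at_top. 0 \<le> X powr (- 2) * l1sum \<mu> 0 X"
      by (intro always_eventually allI mult_nonneg_nonneg L_nonneg) simp
    show "\<forall>\<^sub>F X in at_top. X powr (- 2) * l1sum \<mu> 0 X \<le> X powr (- 2) * (2 * X + 1)"
      using eventually_ge_at_top[of 0] by eventually_elim (intro mult_left_mono L_triv, auto)
  qed
  then show ?thesis unfolding S0_def by simp
qed

lemma S1_sub: "S1 \<subseteq> S0"
proof
  fix s assume "s \<in> S1"
  then have lim: "((\<lambda>X. X powr (- s) * (SUP \<theta>\<in>{0..1}. l1sum \<mu> \<theta> X)) \<longlongrightarrow> 0) at_top"
    unfolding S1_def by simp
  have "((\<lambda>X. X powr (- s) * l1sum \<mu> 0 X) \<longlongrightarrow> 0) at_top"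
  proof (rule tendsto_sandwich[OF _ _ tendsto_const lim])
    show "\<forall>\<^sub>F X in at_top. 0 \<le> X powr (- s) * l1sum \<mu> 0 X"
      by (intro always_eventually allI mult_nonneg_nonneg L_nonneg) simp
    show "\<forall>\<^sub>F X in at_top. X powr (- s) * l1sum \<mu> 0 X \<le> X powr (- s) * (SUP \<theta>\<in>{0..1}. l1sum \<mu> \<theta> X)"
      using eventually_ge_at_top[of 0]
      by eventually_elim (intro mult_left_mono cSUP_upper bdd_L, auto)
  qed
  then show "s \<in> S0" unfolding S0_def by simp
qed

lemma key:
  assumes s: "s \<in> S0" and e: "e > 0"
  shows "s + e \<in> S1"
proof -
  obtain C K where C: "C > 0" and K: "K > 0" and MI': "\<And>X \<theta>. X \<ge> 1 \<Longrightarrow> l1sum \<mu> \<theta> X \<le> C * (1 + ln X) * l1sum \<mu> 0 (K * X)"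
    using MI by blast
  have lim: "((\<lambda>X. X powr (- s) * l1sum \<mu> 0 X) \<longlongrightarrow> 0) at_top" using s unfolding S0_def by simp
  have KX: "filterlim (\<lambda>X. K * X) at_top at_top"
    by (rule filterlim_tendsto_pos_mult_at_top[OF tendsto_const K filterlim_ident])
  have limK: "((\<lambda>X. (K * X) powr (- s) * l1sum \<mu> 0 (K * X)) \<longlongrightarrow> 0) at_top"
    using filterlim_compose[OF lim KX] by simp
  define g where "g X = C * K powr s * (X powr (- e) * (1 + ln X)) * ((K * X) powr (- s) * l1sum \<mu> 0 (K * X))" for X
  have glim: "(g \<longlongrightarrow> 0) at_top"
    unfolding g_def using tendsto_mult[OF tendsto_mult[OF tendsto_const lnpow[OF e]] limK] by simp
  have "((\<lambda>X. X powr (- (s + e)) * (SUP \<theta>\<in>{0..1}. l1sum \<mu> \<theta> X)) \<longlongrightarrow> 0) at_top"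
  proof (rule tendsto_sandwich[OF _ _ tendsto_const glim])
    show "\<forall>\<^sub>F X in at_top. 0 \<le> X powr (- (s + e)) * (SUP \<theta>\<in>{0..1}. l1sum \<mu> \<theta> X)"
      using eventually_ge_at_top[of 0]
    proof eventually_elim
      case (elim X)
      have "0 \<le> l1sum \<mu> 0 X" by (rule L_nonneg)
      also have "\<dots> \<le> (SUP \<theta>\<in>{0..1}. l1sum \<mu> \<theta> X)" by (rule cSUP_upper[OF _ bdd_L]) (use elim in auto)
      finally show ?case by simp
    qed
    show "\<forall>\<^sub>F X in at_top. X powr (- (s + e)) * (SUP \<theta>\<in>{0..1}. l1sum \<mu> \<theta> X) \<le> g X"
      using eventually_ge_at_top[of 1]
    proof eventually_elim
      case (elim X)
      have "(SUP \<theta>\<in>{0..1}. l1sum \<mu> \<theta> X) \<le> C * (1 + ln X) * l1sum \<mu> 0 (K * X)"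
        by (rule cSUP_least) (use MI' elim in auto)
      then have "X powr (- (s + e)) * (SUP \<theta>\<in>{0..1}. l1sum \<mu> \<theta> X) \<le> X powr (- (s + e)) * (C * (1 + ln X) * l1sum \<mu> 0 (K * X))"
        by (intro mult_left_mono) auto
      also have "\<dots> = g X"
      proof -
        have X0: "X > 0" using elim by simp
        have "X powr (- (s + e)) = X powr (- e + - s)" by (rule arg_cong[where f="\<lambda>a. X powr a"]) simp
        also have "\<dots> = X powr (- e) * X powr (- s)" by (rule powr_add)
        finally have "X powr (- (s + e)) = X powr (- e) * X powr (- s)" .
        moreover have "X powr (- s) = K powr s * (K * X) powr (- s)"
          using K X0 by (simp add: powr_mult powr_minus field_simps)
        ultimately show ?thesis unfolding g_def by (simp add: algebra_simps)
      qed
      finally show ?case .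
    qed
  qed
  then show ?thesis unfolding S1_def by simp
qed

lemma Inf_eq: "Inf S0 = Inf S1"
proof (rule antisym)
  have ne0: "S0 \<noteq> {}" using two_S0 by blast
  have bdd0: "bdd_below S0"
  proof (rule bdd_belowI[where m=0])
    fix s assume "s \<in> S0"
    then show "0 \<le> s" using S0_pos[of s] by simp
  qed
  have "2 + 1 \<in> S1" by (rule key[OF two_S0]) simp
  then have ne1: "S1 \<noteq> {}" by auto
  have bdd1: "bdd_below S1" using bdd0 S1_sub by (rule bdd_below_mono)
  show "Inf S0 \<le> Inf S1" by (rule cInf_superset_mono[OF ne1 bdd0 S1_sub])
  show "Inf S1 \<le> Inf S0"
  proof (rule field_le_epsilon)
    fix e :: real assume e: "e > 0"
    have "Inf S1 - e \<le> Inf S0"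
    proof (rule cInf_greatest[OF ne0])
      fix s assume "s \<in> S0"
      then have "s + e \<in> S1" using key e by blast
      then have "Inf S1 \<le> s + e" by (rule cInf_lower[OF _ bdd1])
      then show "Inf S1 - e \<le> s" by simp
    qed
    then show "Inf S1 \<le> Inf S0 + e" by simp
  qed
qed

lemma dims_eq: "dim_l1 \<mu> = dim_l1_star \<mu>"
  unfolding dim_l1_def dim_l1_star_def using Inf_eq unfolding S0_def S1_def by simp

end

theorem lemma5p6:
  fixes b :: nat and D :: "nat set" and x0 :: real and p :: "nat \<Rightarrow> real" and \<mu> :: "real measure"
  assumes "b \<ge> 3"
    and "D \<subseteq> {0..b-1}" and "card D \<ge> 2"
    and "\<forall>i\<in>D. p i \<ge> 0" and "(\<Sum>i\<in>D. p i) = 1"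
    and "self_similar_md b D x0 p \<mu>"
  shows "dim_l1 \<mu> = dim_l1_star \<mu>"
proof -
  interpret ssm b D x0 p \<mu>
    by unfold_locales (use assms in auto)
  show ?thesis by (rule dims_eq)
qed

end
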